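(* The logic $\mathrm{MHT}_f$ is decidable.
   Context: Write $[m,n)=\{i\in\mathbb{N}\mid m\le i<n\}$, $(m,n]=\{i\in\mathbb{N}\mid m<i\le n\}$. Metric formulas over a set of atoms $\mathcal{A}$: $\varphi::=p\mid\bot\mid\varphi_1\wedge\varphi_2\mid\varphi_1\vee\varphi_2\mid\varphi_1\to\varphi_2\mid\bullet_I\varphi\mid\varphi_1\mathsf{S}_I\varphi_2\mid\varphi_1\mathsf{T}_I\varphi_2\mid\circ_I\varphi\mid\varphi_1\mathsf{U}_I\varphi_2\mid\varphi_1\mathsf{R}_I\varphi_2$, $p\in\mathcal{A}$, $I=[m,n)$, $m\in\mathbb{N}$, $n\in\mathbb{N}\cup\{\omega\}$. A timed HT-trace of length $\lambda\in\mathbb{N}\cup\{\omega\}$ is $\mathbf{M}=(\langle\mathbf{H},\mathbf{T}\rangle,\tau)$ with $H_i\subseteq T_i\subseteq\mathcal{A}$ for $i\in[0,\lambda)$, $\tau:[0,\lambda)\to\mathbb{N}$, $\tau(0)=0$, $\tau(i)\le\tau(i+1)$. Satisfaction at $k\in[0,\lambda)$: $\bot$ never; $p$ iff $p\in H_k$; $\wedge,\vee$ usual; $\varphi\to\psi$ iff for both $\mathbf{M}'=\mathbf{M}$ and $\mathbf{M}'=(\langle\mathbf{T},\mathbf{T}\rangle,\tau)$, $\mathbf{M}',k\not\models\varphi$ or $\mathbf{M}',k\models\psi$; $\bullet_I\varphi$ iff $k>0$, $\mathbf{M},k-1\models\varphi$, $\tau(k)-\tau(k-1)\in I$; $\varphi\mathsf{S}_I\psi$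 iff for some $j\in[0,k]$ with $\tau(k)-\tau(j)\in I$, $\mathbf{M},j\models\psi$ and $\mathbf{M},i\models\varphi$ for all $i\in(j,k]$; $\varphi\mathsf{T}_I\psi$ iff for all $j\in[0,k]$ with $\tau(k)-\tau(j)\in I$, $\mathbf{M},j\models\psi$ or $\mathbf{M},i\models\varphi$ for some $i\in(j,k]$; $\circ_I\varphi$ iff $k+1<\lambda$, $\mathbf{M},k+1\models\varphi$, $\tau(k+1)-\tau(k)\in I$; $\varphi\mathsf{U}_I\psi$ iff for some $j\in[k,\lambda)$ with $\tau(j)-\tau(k)\in I$, $\mathbf{M},j\models\psi$ and $\mathbf{M},i\models\varphi$ for all $i\in[k,j)$; $\varphi\mathsf{R}_I\psi$ iff for all $j\in[k,\lambda)$ with $\tau(j)-\tau(k)\in I$, $\mathbf{M},j\models\psi$ or $\mathbf{M},i\models\varphi$ for some $i\in[k,j)$. $\mathrm{MHT}_f$ is the logic (set of tautologies, with its associated satisfiability notion) of metric formulas evaluated over timed HT-traces of finite length $\lambda\in\mathbb{N}$: $\varphi$ is $\mathrm{MHT}_f$-satisfiable if $\mathbf{M},0\models\varphi$ for some such trace, and an $\mathrm{MHT}_f$-tautology if $\mathbf{M},k\models\varphi$ for all such traces and all $k\in[0,\lambda)$. *)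

theory Defs
  imports Main "HOL-Library.Extended_Nat" "HOL-Library.Nat_Bijection"
begin

text \<open>An interval [m,n) is represented by the pair (m, n) with n :: enat
  (\<infinity> plays the role of \<omega>).\<close>

type_synonym interval = "nat \<times> enat"

datatype mform =
    Atom nat
  | Bot
  | And mform mform
  | Or mform mform
  | Impl mform mform
  | Prev interval mform
  | Since interval mform mform
  | Trigger interval mform mform
  | Next interval mform
  | Until interval mform mform
  | Release interval mform mform

definition in_int :: "interval \<Rightarrow> nat \<Rightarrow> bool" where
  "in_int I d \<longleftrightarrow> fst I \<le> d \<and> enat d < snd I"

text \<open>A timed HT-trace of finite length lam is given by H, T :: nat \<Rightarrow> nat set and
  tau :: nat \<Rightarrow> nat (only the values on [0,lam) matter).\<close>

definition timed_ht_trace :: "(nat \<Rightarrow> nat set) \<Rightarrow> (nat \<Rightarrow> nat set) \<Rightarrow> (nat \<Rightarrow> nat) \<Rightarrow> nat \<Rightarrow> bool" where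
  "timed_ht_trace H T tau lam \<longleftrightarrow>
     (\<forall>i<lam. H i \<subseteq> T i) \<and> tau 0 = 0 \<and> (\<forall>i. Suc i < lam \<longrightarrow> tau i \<le> tau (Suc i))"

primrec sat :: "(nat \<Rightarrow> nat set) \<Rightarrow> (nat \<Rightarrow> nat set) \<Rightarrow> (nat \<Rightarrow> nat) \<Rightarrow> nat \<Rightarrow> nat \<Rightarrow> mform \<Rightarrow> bool" where
  "sat H T tau lam k (Atom p) = (p \<in> H k)"
| "sat H T tau lam k Bot = False"
| "sat H T tau lam k (And a b) = (sat H T tau lam k a \<and> sat H T tau lam k b)"
| "sat H T tau lam k (Or a b) = (sat H T tau lam k a \<or> sat H T tau lam k b)"
| "sat H T tau lam k (Impl a b) =
     ((\<not> sat H T tau lam k a \<or> sat H T tau lam k b) \<and>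
      (\<not> sat T T tau lam k a \<or> sat T T tau lam k b))"
| "sat H T tau lam k (Prev I a) =
     (0 < k \<and> sat H T tau lam (k - 1) a \<and> in_int I (tau k - tau (k - 1)))"
| "sat H T tau lam k (Since I a b) =
     (\<exists>j\<le>k. in_int I (tau k - tau j) \<and> sat H T tau lam j b \<and>
        (\<forall>i. j < i \<and> i \<le> k \<longrightarrow> sat H T tau lam i a))"
| "sat H T tau lam k (Trigger I a b) =
     (\<forall>j\<le>k. in_int I (tau k - tau j) \<longrightarrow> sat H T tau lam j b \<or>
        (\<exists>i. j < i \<and> i \<le> k \<and> sat H T tau lam i a))"
| "sat H T tau lam k (Next I a) =
     (k + 1 < lam \<and> sat H T tau lam (k + 1) a \<and> in_int I (tau (k + 1) - tau k))"
| "sat H T tau lam k (Until I a b) =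
     (\<exists>j. k \<le> j \<and> j < lam \<and> in_int I (tau j - tau k) \<and> sat H T tau lam j b \<and>
        (\<forall>i. k \<le> i \<and> i < j \<longrightarrow> sat H T tau lam i a))"
| "sat H T tau lam k (Release I a b) =
     (\<forall>j. k \<le> j \<and> j < lam \<and> in_int I (tau j - tau k) \<longrightarrow> sat H T tau lam j b \<or>
        (\<exists>i. k \<le> i \<and> i < j \<and> sat H T tau lam i a))"

definition MHTf_tautology :: "mform \<Rightarrow> bool" where
  "MHTf_tautology \<phi> \<longleftrightarrow>
     (\<forall>H T tau lam. timed_ht_trace H T tau lam \<longrightarrow> (\<forall>k<lam. sat H T tau lam k \<phi>))"

definition MHTf_satisfiable :: "mform \<Rightarrow> bool" where
  "MHTf_satisfiable \<phi> \<longleftrightarrow>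
     (\<exists>H T tau lam. timed_ht_trace H T tau lam \<and> 0 < lam \<and> sat H T tau lam 0 \<phi>)"

definition enc_int :: "interval \<Rightarrow> nat" where
  "enc_int I = prod_encode (fst I, (case snd I of enat n \<Rightarrow> Suc n | \<infinity> \<Rightarrow> 0))"

primrec enc :: "mform \<Rightarrow> nat" where
  "enc (Atom p) = prod_encode (0, p)"
| "enc Bot = prod_encode (1, 0)"
| "enc (And a b) = prod_encode (2, prod_encode (enc a, enc b))"
| "enc (Or a b) = prod_encode (3, prod_encode (enc a, enc b))"
| "enc (Impl a b) = prod_encode (4, prod_encode (enc a, enc b))"
| "enc (Prev I a) = prod_encode (5, prod_encode (enc_int I, enc a))"
| "enc (Since I a b) = prod_encode (6, prod_encode (enc_int I, prod_encode (enc a, enc b)))"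
| "enc (Trigger I a b) = prod_encode (7, prod_encode (enc_int I, prod_encode (enc a, enc b)))"
| "enc (Next I a) = prod_encode (8, prod_encode (enc_int I, enc a))"
| "enc (Until I a b) = prod_encode (9, prod_encode (enc_int I, prod_encode (enc a, enc b)))"
| "enc (Release I a b) = prod_encode (10, prod_encode (enc_int I, prod_encode (enc a, enc b)))"

datatype recf =
    Zero
  | Succ
  | Proj nat
  | Comp recf "recf list"
  | PrimRec recf recf
  | Minimize recf

inductive eval :: "recf \<Rightarrow> nat list \<Rightarrow> nat \<Rightarrow> bool" where
  eval_Zero: "eval Zero xs 0"
| eval_Succ: "eval Succ [x] (Suc x)"
| eval_Proj: "i < length xs \<Longrightarrow> eval (Proj i) xs (xs ! i)"
| eval_Comp: "length ys = length gs \<Longrightarrow> (\<forall>i<length gs. eval (gs ! i) xs (ys ! i)) \<Longrightarrow>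
     eval f ys r \<Longrightarrow> eval (Comp f gs) xs r"
| eval_Pr0: "eval f xs r \<Longrightarrow> eval (PrimRec f g) (0 # xs) r"
| eval_PrS: "eval (PrimRec f g) (y # xs) r \<Longrightarrow> eval g (y # r # xs) s \<Longrightarrow>
     eval (PrimRec f g) (Suc y # xs) s"
| eval_Mn: "eval f (r # xs) 0 \<Longrightarrow> (\<forall>i<r. \<exists>v. eval f (i # xs) (Suc v)) \<Longrightarrow>
     eval (Minimize f) xs r"

definition decidable_mform :: "(mform \<Rightarrow> bool) \<Rightarrow> bool" where
  "decidable_mform P \<longleftrightarrow> (\<exists>f. \<forall>\<phi>. eval f [enc \<phi>] (if P \<phi> then 1 else 0))"

end

theory Submission
  imports Defs
begin

lemma eval_primrec:
  assumes "eval f xs (F 0)" "\<And>i. eval g (i # F i # xs) (F (Suc i))"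
  shows "eval (PrimRec f g) (y # xs) (F y)"
proof (induction y)
  case 0 then show ?case using assms(1) by (rule eval_Pr0)
next
  case (Suc y) then show ?case using assms(2) by (rule eval_PrS)
qed

lemma eval_primrec':
  assumes "eval f xs (F 0)" "\<And>i. eval g (i # F i # xs) (F (Suc i))" "r = F y"
  shows "eval (PrimRec f g) (y # xs) r"
  using eval_primrec[of f xs F g y] assms by simp

lemma eval_comp1: "eval g1 xs a \<Longrightarrow> eval f [a] r \<Longrightarrow> eval (Comp f [g1]) xs r"
  by (rule eval_Comp[where ys="[a]"]) auto

lemma eval_comp2: "eval g1 xs a \<Longrightarrow> eval g2 xs b \<Longrightarrow> eval f [a,b] r \<Longrightarrow> eval (Comp f [g1,g2]) xs r"
  by (rule eval_Comp[where ys="[a,b]"]) (auto simp: less_Suc_eq)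

lemma eval_comp3: "eval g1 xs a \<Longrightarrow> eval g2 xs b \<Longrightarrow> eval g3 xs c \<Longrightarrow> eval f [a,b,c] r
   \<Longrightarrow> eval (Comp f [g1,g2,g3]) xs r"
  by (rule eval_Comp[where ys="[a,b,c]"]) (auto simp: less_Suc_eq)

lemma eval_proj: "i < length xs \<Longrightarrow> r = xs ! i \<Longrightarrow> eval (Proj i) xs r"
  using eval_Proj by simp

fun rconst :: "nat \<Rightarrow> recf" where
  "rconst 0 = Zero"
| "rconst (Suc n) = Comp Succ [rconst n]"

lemma eval_rconst: "eval (rconst n) xs n"
  by (induction n) (auto intro: eval_Zero eval_Succ eval_comp1)

definition "radd = PrimRec (Proj 0) (Comp Succ [Proj 1])"

lemma eval_radd: "eval radd [a, b] (a + b)"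
  unfolding radd_def
  by (rule eval_primrec[where F="\<lambda>a. a + b", simplified])
     (auto intro!: eval_proj eval_comp1 eval_Succ)

definition "rmul = PrimRec Zero (Comp radd [Proj 1, Proj 2])"

lemma eval_rmul: "eval rmul [a, b] (a * b)"
  unfolding rmul_def
  apply (rule eval_primrec[where F="\<lambda>a. a * b", simplified])
   apply (auto intro!: eval_proj eval_comp2 eval_Zero)
  using eval_radd[of "i * b" b for i] by (simp add: add.commute)

definition "rpred = PrimRec Zero (Proj 0)"

lemma eval_rpred: "eval rpred [a] (a - 1)"
  unfolding rpred_def
  by (rule eval_primrec'[where F="\<lambda>a. a - 1"]) (auto intro!: eval_proj eval_Zero)

definition "rsubr = PrimRec (Proj 0) (Comp rpred [Proj 1])"

lemma eval_rsubr: "eval rsubr [b, a] (a - b)"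
  unfolding rsubr_def
  apply (rule eval_primrec'[where F="\<lambda>b. a - b"])
    apply (rule eval_proj; simp)
  subgoal for i
    using eval_comp1[OF eval_proj[of 1 "[i, a - i, a]" "a - i"] eval_rpred[of "a - i"]]
    by (simp add: diff_diff_add)
  by simp

definition "rpow = PrimRec (rconst 1) (Comp rmul [Proj 1, Proj 2])"

lemma eval_rpow: "eval rpow [e, b] (b ^ e)"
  unfolding rpow_def
  apply (rule eval_primrec[where F="\<lambda>e. b ^ e", simplified])
   apply (auto intro!: eval_proj eval_comp2 eval_rconst[of 1, simplified])
  using eval_rmul by (metis mult.commute)

definition "rsg = PrimRec Zero (rconst 1)"

lemma eval_rsg: "eval rsg [a] (if a = 0 then 0 else 1)"
  unfolding rsg_def
  by (rule eval_primrec[where F="\<lambda>a. if a = 0 then 0 else 1", simplified])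
     (auto intro!: eval_Zero eval_rconst[of 1, simplified])

definition "rlt = Comp rsg [Comp rsubr [Proj 0, Proj 1]]"

lemma eval_rlt: "eval rlt [a, b] (if a < b then 1 else 0)"
  unfolding rlt_def
  apply (rule eval_comp1)
   apply (rule eval_comp2[OF _ _ eval_rsubr]; rule eval_proj; simp)
  using eval_rsg[of "b - a"] eval_rsg[of 0] by (cases "a < b") auto

definition "rcond = PrimRec (Proj 1) (Proj 2)"

lemma eval_rcond: "eval rcond [c, a, b] (if c = 0 then b else a)"
  unfolding rcond_def
  by (rule eval_primrec[where F="\<lambda>c. if c = 0 then b else a", simplified])
     (auto intro!: eval_proj)

datatype tm = Var nat | Cst nat | Plus tm tm | Minus tm tm | Times tm tm | Power tm tm
  | Less tm tm | Cond tm tm tm | BMin nat tm tm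

definition bmin :: "nat \<Rightarrow> (nat \<Rightarrow> bool) \<Rightarrow> nat" where
  "bmin n P = (if \<exists>y<n. P y then (LEAST y. P y) else n)"

lemma bmin_0[simp]: "bmin 0 P = 0" by (simp add: bmin_def)

lemma bmin_le: "bmin n P \<le> n"
  unfolding bmin_def by (auto intro: Least_le order.trans[OF Least_le] less_imp_le)

lemma bmin_Suc: "bmin (Suc n) P = (if bmin n P < n then bmin n P else if P n then n else Suc n)"
proof (cases "\<exists>y<n. P y")
  case True
  then obtain y where "y < n" "P y" by auto
  then have "(LEAST y. P y) < n" by (meson Least_le order.strict_trans1)
  then show ?thesis using True by (auto simp: bmin_def less_Suc_eq)
next
  case False
  have b: "bmin n P = n" unfolding bmin_def by (rule if_not_P[OF False])
  show ?thesis
  proof (cases "P n")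
    case True
    have "(LEAST y. P y) = n"
      by (rule Least_equality) (use False True not_less in blast)+
    then show ?thesis using False True b unfolding bmin_def by auto
  next
    case F2: False
    have "\<not> (\<exists>y<Suc n. P y)" using False F2 less_Suc_eq by auto
    then show ?thesis using b F2 unfolding bmin_def by auto
  qed
qed

primrec ev :: "tm \<Rightarrow> (nat \<Rightarrow> nat) \<Rightarrow> nat" where
  "ev (Var v) s = s v"
| "ev (Cst n) s = n"
| "ev (Plus a b) s = ev a s + ev b s"
| "ev (Minus a b) s = ev a s - ev b s"
| "ev (Times a b) s = ev a s * ev b s"
| "ev (Power a b) s = ev a s ^ ev b s"
| "ev (Less a b) s = (if ev a s < ev b s then 1 else 0)"
| "ev (Cond c a b) s = (if ev c s = 0 then ev b s else ev a s)"
| "ev (BMin v t b) s = bmin (ev t s) (\<lambda>y. ev b (s(v := y)) \<noteq> 0)"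

primrec fv :: "tm \<Rightarrow> nat set" where
  "fv (Var v) = {v}"
| "fv (Cst n) = {}"
| "fv (Plus a b) = fv a \<union> fv b"
| "fv (Minus a b) = fv a \<union> fv b"
| "fv (Times a b) = fv a \<union> fv b"
| "fv (Power a b) = fv a \<union> fv b"
| "fv (Less a b) = fv a \<union> fv b"
| "fv (Cond c a b) = fv c \<union> fv a \<union> fv b"
| "fv (BMin v t b) = fv t \<union> (fv b - {v})"

lemma ev_cong: "\<forall>v\<in>fv t. s v = s' v \<Longrightarrow> ev t s = ev t s'"
proof (induction t arbitrary: s s')
  case (BMin v t b)
  have "\<forall>w\<in>fv b. (s(v:=y)) w = (s'(v:=y)) w" for y using BMin.prems by auto
  then have "ev b (s(v := y)) = ev b (s'(v := y))" for y using BMin.IH(2) by blast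
  moreover have "ev t s = ev t s'" using BMin.IH(1) BMin.prems by simp
  ultimately show ?case by simp
next
  case (Plus a b)
  have "ev a s = ev a s'" by (rule Plus.IH(1)) (use Plus.prems in auto)
  moreover have "ev b s = ev b s'" by (rule Plus.IH(2)) (use Plus.prems in auto)
  ultimately show ?case by simp
next
  case (Minus a b)
  have "ev a s = ev a s'" by (rule Minus.IH(1)) (use Minus.prems in auto)
  moreover have "ev b s = ev b s'" by (rule Minus.IH(2)) (use Minus.prems in auto)
  ultimately show ?case by simp
next
  case (Times a b)
  have "ev a s = ev a s'" by (rule Times.IH(1)) (use Times.prems in auto)
  moreover have "ev b s = ev b s'" by (rule Times.IH(2)) (use Times.prems in auto)
  ultimately show ?case by simp
next
  case (Power a b)
  have "ev a s = ev a s'" by (rule Power.IH(1)) (use Power.prems in auto)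
  moreover have "ev b s = ev b s'" by (rule Power.IH(2)) (use Power.prems in auto)
  ultimately show ?case by simp
next
  case (Less a b)
  have "ev a s = ev a s'" by (rule Less.IH(1)) (use Less.prems in auto)
  moreover have "ev b s = ev b s'" by (rule Less.IH(2)) (use Less.prems in auto)
  ultimately show ?case by simp
next
  case (Cond c a b)
  have "ev c s = ev c s'" by (rule Cond.IH(1)) (use Cond.prems in auto)
  moreover have "ev a s = ev a s'" by (rule Cond.IH(2)) (use Cond.prems in auto)
  moreover have "ev b s = ev b s'" by (rule Cond.IH(3)) (use Cond.prems in auto)
  ultimately show ?case by simp
qed simp_all

lemma ev_upd[simp]: "v \<notin> fv t \<Longrightarrow> ev t (s(v := y)) = ev t s"
  by (rule ev_cong) (auto simp: fun_upd_def)

fun idx :: "nat list \<Rightarrow> nat \<Rightarrow> nat" where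
  "idx [] w = 0"
| "idx (v # vs) w = (if v = w then 0 else Suc (idx vs w))"

lemma idx_less: "w \<in> set vs \<Longrightarrow> idx vs w < length vs"
  by (induction vs) auto

fun compile :: "nat list \<Rightarrow> tm \<Rightarrow> recf" where
  "compile vs (Var v) = Proj (idx vs v)"
| "compile vs (Cst n) = rconst n"
| "compile vs (Plus a b) = Comp radd [compile vs a, compile vs b]"
| "compile vs (Minus a b) = Comp rsubr [compile vs b, compile vs a]"
| "compile vs (Times a b) = Comp rmul [compile vs a, compile vs b]"
| "compile vs (Power a b) = Comp rpow [compile vs b, compile vs a]"
| "compile vs (Less a b) = Comp rlt [compile vs a, compile vs b]"
| "compile vs (Cond c a b) = Comp rcond [compile vs c, compile vs a, compile vs b]"
| "compile vs (BMin v t b) =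
    Comp (PrimRec Zero
      (Comp rcond [Comp rlt [Proj 1, Proj 0], Proj 1,
        Comp rcond [Comp (compile (v # vs) b) (Proj 0 # map (\<lambda>k. Proj (k + 2)) [0..<length vs]),
                    Proj 0, Comp Succ [Proj 0]]]))
     (compile vs t # map Proj [0..<length vs])"

lemma eval_comp_proj_all:
  assumes "eval f xs r"
  shows "eval (Comp f (map Proj [0..<length xs])) xs r"
  by (rule eval_Comp[where ys=xs]) (auto intro!: eval_proj assms)

lemma eval_comp_proj_shift:
  assumes "eval f (i # xs) r"
  shows "eval (Comp f (Proj 0 # map (\<lambda>k. Proj (k + 2)) [0..<length xs])) (i # c # xs) r"
  apply (rule eval_Comp[where ys="i # xs"])
    apply simp
   apply (auto intro!: eval_proj assms simp: nth_Cons' )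
  done

lemma eval_rcond': "r = (if c = 0 then b else a) \<Longrightarrow> eval rcond [c, a, b] r"
  using eval_rcond by simp
lemma eval_rlt': "r = (if a < b then 1 else 0) \<Longrightarrow> eval rlt [a, b] r"
  using eval_rlt by simp

lemma comp_correct:
  assumes "fv t \<subseteq> set vs" "length xs = length vs" "\<And>w. w \<in> set vs \<Longrightarrow> xs ! idx vs w = s w"
  shows "eval (compile vs t) xs (ev t s)"
  using assms
proof (induction t arbitrary: vs xs s)
  case (Var v)
  then show ?case by (auto intro!: eval_proj idx_less)
next
  case (Cst n)
  then show ?case by (auto intro: eval_rconst)
next
  case (Plus a b)
  have ha: "eval (compile vs a) xs (ev a s)" by (rule Plus.IH(1)) (use Plus.prems in auto)
  have hb: "eval (compile vs b) xs (ev b s)" by (rule Plus.IH(2)) (use Plus.prems in auto)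
  show ?case using eval_comp2[OF ha hb eval_radd] by simp
next
  case (Minus a b)
  have ha: "eval (compile vs a) xs (ev a s)" by (rule Minus.IH(1)) (use Minus.prems in auto)
  have hb: "eval (compile vs b) xs (ev b s)" by (rule Minus.IH(2)) (use Minus.prems in auto)
  show ?case using eval_comp2[OF hb ha eval_rsubr] by simp
next
  case (Times a b)
  have ha: "eval (compile vs a) xs (ev a s)" by (rule Times.IH(1)) (use Times.prems in auto)
  have hb: "eval (compile vs b) xs (ev b s)" by (rule Times.IH(2)) (use Times.prems in auto)
  show ?case using eval_comp2[OF ha hb eval_rmul] by simp
next
  case (Power a b)
  have ha: "eval (compile vs a) xs (ev a s)" by (rule Power.IH(1)) (use Power.prems in auto)
  have hb: "eval (compile vs b) xs (ev b s)" by (rule Power.IH(2)) (use Power.prems in auto)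
  show ?case using eval_comp2[OF hb ha eval_rpow] by simp
next
  case (Less a b)
  have ha: "eval (compile vs a) xs (ev a s)" by (rule Less.IH(1)) (use Less.prems in auto)
  have hb: "eval (compile vs b) xs (ev b s)" by (rule Less.IH(2)) (use Less.prems in auto)
  show ?case using eval_comp2[OF ha hb eval_rlt] by simp
next
  case (Cond c a b)
  have hc: "eval (compile vs c) xs (ev c s)" by (rule Cond.IH(1)) (use Cond.prems in auto)
  have ha: "eval (compile vs a) xs (ev a s)" by (rule Cond.IH(2)) (use Cond.prems in auto)
  have hb: "eval (compile vs b) xs (ev b s)" by (rule Cond.IH(3)) (use Cond.prems in auto)
  show ?case unfolding compile.simps ev.simps by (rule eval_comp3[OF hc ha hb eval_rcond'], simp)
next
  case (BMin v t b)
  let ?P = "\<lambda>y. ev b (s(v := y)) \<noteq> 0"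
  have hb: "eval (compile (v # vs) b) (y # xs) (ev b (s(v := y)))" for y
    by (rule BMin.IH(2)) (use BMin.prems in auto)
  have ht: "eval (compile vs t) xs (ev t s)"
    by (rule BMin.IH(1)) (use BMin.prems in auto)
  have step: "eval (Comp rcond [Comp rlt [Proj 1, Proj 0], Proj 1,
        Comp rcond [Comp (compile (v # vs) b) (Proj 0 # map (\<lambda>k. Proj (k + 2)) [0..<length vs]),
                    Proj 0, Comp Succ [Proj 0]]]) (i # bmin i ?P # xs) (bmin (Suc i) ?P)" for i
    apply (rule eval_comp3)
       apply (rule eval_comp2[OF _ _ eval_rlt]; rule eval_proj; simp)
      apply (rule eval_proj; simp)
     apply (rule eval_comp3)
        apply (rule eval_comp_proj_shift[where xs=xs, unfolded BMin.prems(2), OF hb])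
       apply (rule eval_proj; simp)
      apply (rule eval_comp1[OF _ eval_Succ]; rule eval_proj; simp)
     apply (rule eval_rcond)
    apply (rule eval_rcond')
    by (simp add: bmin_Suc)
  have pr: "eval (PrimRec Zero (Comp rcond [Comp rlt [Proj 1, Proj 0], Proj 1,
        Comp rcond [Comp (compile (v # vs) b) (Proj 0 # map (\<lambda>k. Proj (k + 2)) [0..<length vs]),
                    Proj 0, Comp Succ [Proj 0]]])) (ev t s # xs) (bmin (ev t s) ?P)"
    apply (rule eval_primrec'[where F="\<lambda>n. bmin n ?P"])
      apply (simp add: eval_Zero)
     apply (rule step)
    apply (rule refl)
    done
  show ?case
    apply simp
    apply (rule eval_Comp[where ys="ev t s # xs"])
      apply (simp add: BMin.prems)
     apply (intro allI impI)
    subgoal for i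
      apply (cases i)
       apply (simp add: ht)
      apply (simp add: BMin.prems)
      apply (rule eval_proj)
       apply (simp_all add: BMin.prems(2))
      done
    using pr by simp
qed


definition hv :: "tm \<Rightarrow> (nat \<Rightarrow> nat) \<Rightarrow> bool" where "hv t s \<longleftrightarrow> ev t s \<noteq> 0"

definition "tNot a = Cond a (Cst 0) (Cst 1)"
definition "tAnd a b = Cond a (Cond b (Cst 1) (Cst 0)) (Cst 0)"
definition "tOr a b = Cond a (Cst 1) (Cond b (Cst 1) (Cst 0))"
definition "tImp a b = tOr (tNot a) b"
definition "tIff a b = Cond a (Cond b (Cst 1) (Cst 0)) (tNot b)"
definition "tEq a b = tAnd (tNot (Less a b)) (tNot (Less b a))"
definition "tLe a b = tNot (Less b a)"
definition "tEx v t b = Less (BMin v t b) t"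
definition "tAll v t b = tNot (tEx v t (tNot b))"
definition "tDiv a b = BMin 100 (Plus a (Cst 1))
   (tOr (tEq b (Cst 0)) (Less a (Times (Plus (Var 100) (Cst 1)) b)))"
definition "tMod a b = Minus a (Times b (tDiv a b))"
definition "tDig bb c i = tMod (tDiv c (Power bb i)) bb"
definition "tPE a b z = tEq (Times (Cst 2) z) (Plus (Times (Plus a b) (Plus (Plus a b) (Cst 1))) (Times (Cst 2) a))"
definition "tDec v1 v2 z body = tEx v1 (Plus z (Cst 1)) (tEx v2 (Plus z (Cst 1)) (tAnd (tPE (Var v1) (Var v2) z) body))"

lemma fv_helpers[simp]:
  "fv (tNot a) = fv a" "fv (tAnd a b) = fv a \<union> fv b" "fv (tOr a b) = fv a \<union> fv b"
  "fv (tImp a b) = fv a \<union> fv b" "fv (tIff a b) = fv a \<union> fv b" "fv (tEq a b) = fv a \<union> fv b"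
  "fv (tLe a b) = fv a \<union> fv b" "fv (tEx v t b) = fv t \<union> (fv b - {v})"
  "fv (tAll v t b) = fv t \<union> (fv b - {v})"
  "fv (tDiv a b) = fv a \<union> (fv b - {100})"
  "fv (tMod a b) = fv a \<union> fv b"
  "fv (tDig bb c i) = fv bb \<union> fv c \<union> (fv i - {100})"
  "fv (tPE a b z) = fv a \<union> fv b \<union> fv z"
  "fv (tDec v1 v2 z body) = fv z \<union> (fv body - {v1, v2})"
  unfolding tNot_def tAnd_def tOr_def tImp_def tIff_def tEq_def tLe_def tEx_def tAll_def tDiv_def
    tMod_def tDig_def tPE_def tDec_def
  by auto

lemma hv_simps[simp]:
  "hv (Cst n) s = (n \<noteq> 0)"
  "hv (Less a b) s = (ev a s < ev b s)"
  "hv (Cond c a b) s = (if hv c s then hv a s else hv b s)"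
  "hv (tNot a) s = (\<not> hv a s)"
  "hv (tAnd a b) s = (hv a s \<and> hv b s)"
  "hv (tOr a b) s = (hv a s \<or> hv b s)"
  "hv (tImp a b) s = (hv a s \<longrightarrow> hv b s)"
  "hv (tIff a b) s = (hv a s = hv b s)"
  "hv (tEq a b) s = (ev a s = ev b s)"
  "hv (tLe a b) s = (ev a s \<le> ev b s)"
  unfolding hv_def tNot_def tAnd_def tOr_def tImp_def tIff_def tEq_def tLe_def
  by auto

lemma hv_tEx[simp]: "hv (tEx v t b) s = (\<exists>y<ev t s. hv b (s(v := y)))"
proof -
  let ?P = "\<lambda>y. ev b (s(v := y)) \<noteq> 0"
  have "bmin (ev t s) ?P < ev t s \<longleftrightarrow> (\<exists>y<ev t s. ?P y)"
  proof
    assume "bmin (ev t s) ?P < ev t s" then show "\<exists>y<ev t s. ?P y"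
      unfolding bmin_def by (auto split: if_splits)
  next
    assume "\<exists>y<ev t s. ?P y"
    then obtain y where "y < ev t s" "?P y" by auto
    then have "(LEAST y. ?P y) < ev t s" by (meson Least_le order.strict_trans1)
    then show "bmin (ev t s) ?P < ev t s" using \<open>\<exists>y<ev t s. ?P y\<close> unfolding bmin_def by simp
  qed
  then show ?thesis unfolding tEx_def hv_def by simp
qed

lemma hv_tAll[simp]: "hv (tAll v t b) s = (\<forall>y<ev t s. hv b (s(v := y)))"
  unfolding tAll_def by simp

lemma ev_tDiv[simp]: "100 \<notin> fv a \<Longrightarrow> 100 \<notin> fv b \<Longrightarrow> ev (tDiv a b) s = ev a s div ev b s"
proof -
  assume a: "100 \<notin> fv a" "100 \<notin> fv b"
  let ?A = "ev a s" and ?B = "ev b s"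
  let ?P = "\<lambda>q. ?B = 0 \<or> ?A < (q + 1) * ?B"
  have P: "(\<lambda>y. ev (tOr (tEq b (Cst 0)) (Less a (Times (Plus (Var 100) (Cst 1)) b))) (s(100 := y)) \<noteq> 0) = ?P"
  proof (rule ext)
    fix y
    let ?X = "tOr (tEq b (Cst 0)) (Less a (Times (Plus (Var 100) (Cst 1)) b))"
    have "ev ?X (s(100 := y)) \<noteq> 0 \<longleftrightarrow> hv ?X (s(100 := y))" by (simp only: hv_def)
    also have "\<dots> \<longleftrightarrow> ?P y" using a by simp
    finally show "(ev ?X (s(100 := y)) \<noteq> 0) = ?P y" .
  qed
  have q: "?P (?A div ?B)"
  proof (cases "?B = 0")
    case False
    have "?A = ?A div ?B * ?B + ?A mod ?B" by (rule div_mult_mod_eq[symmetric])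
    moreover have "?A mod ?B < ?B" using False by simp
    moreover have "(?A div ?B + 1) * ?B = ?A div ?B * ?B + ?B" by simp
    ultimately show ?thesis by linarith
  qed simp
  have l: "\<not> ?P y" if "y < ?A div ?B" for y
  proof -
    have f1: "?B \<noteq> 0" using that by (metis div_by_0 not_less0)
    have f2: "(y + 1) * ?B \<le> ?A div ?B * ?B" using that by (intro mult_le_mono1) simp
    have f3: "?A div ?B * ?B \<le> ?A" by (simp add: div_times_less_eq_dividend)
    from f2 f3 have "(y + 1) * ?B \<le> ?A" by (rule le_trans)
    then show ?thesis using f1 by (simp only: not_less de_Morgan_disj) simp
  qed
  have lt: "?A div ?B < ?A + 1" by (simp add: le_imp_less_Suc div_le_dividend)
  have "(LEAST y. ?P y) = ?A div ?B"
    by (rule Least_equality[where P="?P", OF q]) (use l not_less in blast)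
  then have "bmin (?A + 1) ?P = ?A div ?B" using q lt unfolding bmin_def by auto
  then show ?thesis unfolding tDiv_def using P by simp
qed

definition bitn :: "nat \<Rightarrow> nat \<Rightarrow> nat" where "bitn c i = c div 2 ^ i mod 2"
definition dig :: "nat \<Rightarrow> nat \<Rightarrow> nat \<Rightarrow> nat" where "dig bb c i = c div bb ^ i mod bb"

lemma ev_tMod[simp]: "100 \<notin> fv a \<Longrightarrow> 100 \<notin> fv b \<Longrightarrow> ev (tMod a b) s = ev a s mod ev b s"
  unfolding tMod_def by (simp add: minus_mult_div_eq_mod)

lemma ev_tDig[simp]: "100 \<notin> fv bb \<Longrightarrow> 100 \<notin> fv c \<Longrightarrow> 100 \<notin> fv i \<Longrightarrow>
   ev (tDig bb c i) s = dig (ev bb s) (ev c s) (ev i s)"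
  unfolding tDig_def dig_def by simp

lemma pe_iff: "2 * z = (a + b) * (a + b + 1) + 2 * a \<longleftrightarrow> prod_encode (a, b) = z"
proof -
  have t: "2 * triangle n = n * (n + 1)" for n
    by (induction n) (auto simp: algebra_simps)
  have "2 * prod_encode (a, b) = 2 * triangle (a + b) + 2 * a"
    unfolding prod_encode_def by simp
  then have "2 * prod_encode (a, b) = (a + b) * (a + b + 1) + 2 * a"
    by (simp only: t)
  then show ?thesis by linarith
qed

lemma hv_tPE[simp]: "hv (tPE a b z) s = (prod_encode (ev a s, ev b s) = ev z s)"
  unfolding tPE_def using pe_iff by simp

lemma hv_tDec[simp]:
  assumes "v1 \<noteq> v2" "v1 \<notin> fv z" "v2 \<notin> fv z"
  shows "hv (tDec v1 v2 z body) s =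
    hv body (s(v1 := fst (prod_decode (ev z s)), v2 := snd (prod_decode (ev z s))))"
proof -
  have ez: "ev z (s(v1 := a, v2 := b)) = ev z s" for a b using assms by simp
  let ?Z = "ev z s"
  obtain a b where ab: "prod_decode ?Z = (a, b)" by fastforce
  then have e: "prod_encode (a, b) = ?Z" by (metis prod_decode_inverse)
  have "a \<le> ?Z" "b \<le> ?Z" using e le_prod_encode_1 le_prod_encode_2 by metis+
  then show ?thesis unfolding tDec_def using assms ab e
    by (auto simp: ez fun_upd_twist[of v2 v1] less_Suc_eq_le
        dest: arg_cong[where f=prod_decode])
qed


lemma hv_Var[simp]: "hv (Var v) s = (s v \<noteq> 0)" by (simp add: hv_def)

definition "tBeta = Plus (Times (Var 1) (Plus (Var 0) (Cst 1))) (Cst 1)"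
definition "tTau pt = tDig tBeta (Var 5) pt"
definition "tLL zt pt Xt = tEq (tDig (Cst 2) (Var 6) (Plus (Times (Plus (Times zt (Var 1)) pt) (Cst 2)) Xt)) (Cst 1)"
definition "tAidx pt att = Plus (Times pt (Plus (Var 0) (Cst 1))) att"
definition "tAT = Cond (tEq (Var 9) (Cst 0)) (tEq (tDig (Cst 2) (Var 3) (tAidx (Var 8) (Var 11))) (Cst 1))
                   (tEq (tDig (Cst 2) (Var 4) (tAidx (Var 8) (Var 11))) (Cst 1))"
definition "tInI dt = tAnd (tLe (Var 14) dt) (tOr (tEq (Var 15) (Cst 0)) (Less (Plus dt (Cst 1)) (Var 15)))"

lemma fv_g[simp]: "fv tBeta = {0, 1}" "fv (tTau pt) = {0,1,5} \<union> (fv pt - {100})"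
  "fv (tLL zt pt Xt) = {1, 6} \<union> ((fv zt \<union> fv pt \<union> fv Xt) - {100})"
  "fv (tAidx pt att) = fv pt \<union> fv att \<union> {0}"
  "fv tAT = {0, 3, 4, 8, 9, 11}"
  "fv (tInI dt) = {14, 15} \<union> fv dt"
  unfolding tBeta_def tTau_def tLL_def tAidx_def tAT_def tInI_def by auto

lemma ev_g[simp]:
  "ev tBeta s = s 1 * (s 0 + 1) + 1"
  "100 \<notin> fv pt \<Longrightarrow> ev (tTau pt) s = dig (s 1 * (s 0 + 1) + 1) (s 5) (ev pt s)"
  "100 \<notin> fv zt \<Longrightarrow> 100 \<notin> fv pt \<Longrightarrow> 100 \<notin> fv Xt \<Longrightarrow>
     hv (tLL zt pt Xt) s = (dig 2 (s 6) ((ev zt s * s 1 + ev pt s) * 2 + ev Xt s) = 1)"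
  "hv tAT s = (if s 9 = 0 then dig 2 (s 3) (s 8 * (s 0 + 1) + s 11) = 1
                else dig 2 (s 4) (s 8 * (s 0 + 1) + s 11) = 1)"
  "hv (tInI dt) s = (s 14 \<le> ev dt s \<and> (s 15 = 0 \<or> ev dt s + 1 < s 15))"
  unfolding tBeta_def tTau_def tLL_def tAidx_def tAT_def tInI_def by auto

definition stepD :: "(nat \<Rightarrow> nat \<Rightarrow> nat \<Rightarrow> bool) \<Rightarrow> (nat \<Rightarrow> nat \<Rightarrow> nat \<Rightarrow> bool) \<Rightarrow> (nat \<Rightarrow> nat)
  \<Rightarrow> nat \<Rightarrow> nat \<Rightarrow> nat \<Rightarrow> nat \<Rightarrow> nat \<Rightarrow> nat \<Rightarrow> nat \<Rightarrow> nat \<Rightarrow> nat \<Rightarrow> nat \<Rightarrow> nat \<Rightarrow> bool" where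
  "stepD LL AT tau lam tg r u v m nc a2 b2 p X =
   (let inI = (\<lambda>d. m \<le> d \<and> (nc = 0 \<or> d + 1 < nc)) in
    if tg = 0 then AT X p r
    else if tg = 1 then False
    else if tg = 2 then LL u p X \<and> LL v p X
    else if tg = 3 then LL u p X \<or> LL v p X
    else if tg = 4 then (LL u p X \<longrightarrow> LL v p X) \<and> (LL u p 1 \<longrightarrow> LL v p 1)
    else if tg = 5 then 0 < p \<and> LL v (p - 1) X \<and> inI (tau p - tau (p - 1))
    else if tg = 6 then (\<exists>j<p+1. inI (tau p - tau j) \<and> LL b2 j X \<and> (\<forall>i<p+1. j < i \<longrightarrow> LL a2 i X))
    else if tg = 7 then (\<forall>j<p+1. inI (tau p - tau j) \<longrightarrow> LL b2 j X \<or> (\<exists>i<p+1. j < i \<and> LL a2 i X))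
    else if tg = 8 then p + 1 < lam \<and> LL v (p + 1) X \<and> inI (tau (p + 1) - tau p)
    else if tg = 9 then (\<exists>j<lam. p \<le> j \<and> inI (tau j - tau p) \<and> LL b2 j X \<and> (\<forall>i<j. p \<le> i \<longrightarrow> LL a2 i X))
    else if tg = 10 then (\<forall>j<lam. p \<le> j \<and> inI (tau j - tau p) \<longrightarrow> LL b2 j X \<or> (\<exists>i<j. p \<le> i \<and> LL a2 i X))
    else False)"

abbreviation "vp \<equiv> Var 8"
abbreviation "vX \<equiv> Var 9"
abbreviation "vj \<equiv> Var 18"
abbreviation "vi \<equiv> Var 19"

definition "tSTEP =
  Cond (tEq (Var 10) (Cst 0)) tAT
 (Cond (tEq (Var 10) (Cst 1)) (Cst 0)
 (Cond (tEq (Var 10) (Cst 2)) (tAnd (tLL (Var 12) vp vX) (tLL (Var 13) vp vX))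
 (Cond (tEq (Var 10) (Cst 3)) (tOr (tLL (Var 12) vp vX) (tLL (Var 13) vp vX))
 (Cond (tEq (Var 10) (Cst 4)) (tAnd (tImp (tLL (Var 12) vp vX) (tLL (Var 13) vp vX))
                                    (tImp (tLL (Var 12) vp (Cst 1)) (tLL (Var 13) vp (Cst 1))))
 (Cond (tEq (Var 10) (Cst 5)) (tAnd (Less (Cst 0) vp) (tAnd (tLL (Var 13) (Minus vp (Cst 1)) vX)
                                    (tInI (Minus (tTau vp) (tTau (Minus vp (Cst 1)))))))
 (Cond (tEq (Var 10) (Cst 6)) (tEx 18 (Plus vp (Cst 1)) (tAnd (tInI (Minus (tTau vp) (tTau vj)))
        (tAnd (tLL (Var 17) vj vX) (tAll 19 (Plus vp (Cst 1)) (tImp (Less vj vi) (tLL (Var 16) vi vX))))))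
 (Cond (tEq (Var 10) (Cst 7)) (tAll 18 (Plus vp (Cst 1)) (tImp (tInI (Minus (tTau vp) (tTau vj)))
        (tOr (tLL (Var 17) vj vX) (tEx 19 (Plus vp (Cst 1)) (tAnd (Less vj vi) (tLL (Var 16) vi vX))))))
 (Cond (tEq (Var 10) (Cst 8)) (tAnd (Less (Plus vp (Cst 1)) (Var 1)) (tAnd (tLL (Var 13) (Plus vp (Cst 1)) vX)
        (tInI (Minus (tTau (Plus vp (Cst 1))) (tTau vp)))))
 (Cond (tEq (Var 10) (Cst 9)) (tEx 18 (Var 1) (tAnd (tLe vp vj) (tAnd (tInI (Minus (tTau vj) (tTau vp)))
        (tAnd (tLL (Var 17) vj vX) (tAll 19 vj (tImp (tLe vp vi) (tLL (Var 16) vi vX)))))))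
 (Cond (tEq (Var 10) (Cst 10)) (tAll 18 (Var 1) (tImp (tAnd (tLe vp vj) (tInI (Minus (tTau vj) (tTau vp))))
        (tOr (tLL (Var 17) vj vX) (tEx 19 vj (tAnd (tLe vp vi) (tLL (Var 16) vi vX))))))
 (Cst 0)))))))))))"

definition LLof :: "nat \<Rightarrow> nat \<Rightarrow> nat \<Rightarrow> nat \<Rightarrow> nat \<Rightarrow> bool" where "LLof lam Lc = (\<lambda>z p X. dig 2 Lc ((z * lam + p) * 2 + X) = 1)"
definition ATof :: "nat \<Rightarrow> nat \<Rightarrow> nat \<Rightarrow> nat \<Rightarrow> nat \<Rightarrow> nat \<Rightarrow> bool" where "ATof x hc tc = (\<lambda>X p a. if X = 0 then dig 2 hc (p * (x + 1) + a) = 1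
                else dig 2 tc (p * (x + 1) + a) = 1)"
definition TAUof :: "nat \<Rightarrow> nat \<Rightarrow> nat \<Rightarrow> nat \<Rightarrow> nat" where "TAUof x lam ta = (\<lambda>p. dig (lam * (x + 1) + 1) ta p)"

lemma hv_tSTEP: "hv tSTEP s = stepD (LLof (s 1) (s 6)) (ATof (s 0) (s 3) (s 4)) (TAUof (s 0) (s 1) (s 5))
   (s 1) (s 10) (s 11) (s 12) (s 13) (s 14) (s 15) (s 16) (s 17) (s 8) (s 9)"
  unfolding tSTEP_def stepD_def LLof_def ATof_def TAUof_def Let_def
  by simp

definition stepN :: "(nat \<Rightarrow> nat \<Rightarrow> nat \<Rightarrow> bool) \<Rightarrow> (nat \<Rightarrow> nat \<Rightarrow> nat \<Rightarrow> bool) \<Rightarrow> (nat \<Rightarrow> nat)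
  \<Rightarrow> nat \<Rightarrow> nat \<Rightarrow> nat \<Rightarrow> nat \<Rightarrow> bool" where
  "stepN LL AT tau lam z p X =
    stepD LL AT tau lam (fst (prod_decode z)) (snd (prod_decode z))
      (fst (prod_decode (snd (prod_decode z)))) (snd (prod_decode (snd (prod_decode z))))
      (fst (prod_decode (fst (prod_decode (snd (prod_decode z))))))
      (snd (prod_decode (fst (prod_decode (snd (prod_decode z))))))
      (fst (prod_decode (snd (prod_decode (snd (prod_decode z))))))
      (snd (prod_decode (snd (prod_decode (snd (prod_decode z))))))
      p X"

definition "tCONSTR = tAll 7 (Plus (Var 0) (Cst 1)) (tAll 8 (Var 1) (tAll 9 (Cst 2)
  (tDec 10 11 (Var 7) (tDec 12 13 (Var 11) (tDec 14 15 (Var 12) (tDec 16 17 (Var 13)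
     (tIff (tLL (Var 7) vp vX) tSTEP)))))))"

definition constrH :: "nat \<Rightarrow> nat \<Rightarrow> nat \<Rightarrow> nat \<Rightarrow> nat \<Rightarrow> nat \<Rightarrow> bool" where
  "constrH x lam hc tc ta Lc \<longleftrightarrow> (\<forall>z<x+1. \<forall>p<lam. \<forall>X<2.
     LLof lam Lc z p X = stepN (LLof lam Lc) (ATof x hc tc) (TAUof x lam ta) lam z p X)"

lemma fv_tSTEP: "fv tSTEP \<subseteq> {0,1,3,4,5,6,8,9,10,11,12,13,14,15,16,17}"
  unfolding tSTEP_def by auto

lemma hv_tCONSTR: "hv tCONSTR s = constrH (s 0) (s 1) (s 3) (s 4) (s 5) (s 6)"
  unfolding tCONSTR_def constrH_def stepN_def
  by (simp add: hv_tSTEP LLof_def add_mult_distrib)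

definition "tTRACE = tAnd (tEq (tTau (Cst 0)) (Cst 0))
  (tAnd (tAll 8 (Var 1) (tImp (Less (Plus vp (Cst 1)) (Var 1)) (tLe (tTau vp) (tTau (Plus vp (Cst 1))))))
   (tAll 8 (Var 1) (tAll 12 (Plus (Var 0) (Cst 1))
     (tLe (tDig (Cst 2) (Var 3) (tAidx vp (Var 12))) (tDig (Cst 2) (Var 4) (tAidx vp (Var 12)))))))"

definition traceH :: "nat \<Rightarrow> nat \<Rightarrow> nat \<Rightarrow> nat \<Rightarrow> nat \<Rightarrow> bool" where
  "traceH x lam hc tc ta \<longleftrightarrow> TAUof x lam ta 0 = 0 \<and>
     (\<forall>p<lam. p + 1 < lam \<longrightarrow> TAUof x lam ta p \<le> TAUof x lam ta (p + 1)) \<and>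
     (\<forall>p<lam. \<forall>a<x+1. dig 2 hc (p * (x + 1) + a) \<le> dig 2 tc (p * (x + 1) + a))"

lemma hv_tTRACE: "hv tTRACE s = traceH (s 0) (s 1) (s 3) (s 4) (s 5)"
  unfolding tTRACE_def traceH_def TAUof_def tAidx_def
  by simp

definition "Lmax x = 2 * 2 ^ (2 * (x + 1) * (x + 1)) + 2"

definition "tGOOD fin = tEx 1 (Plus (Plus (Times (Cst 2) (Power (Cst 2) (Times (Times (Cst 2) (Plus (Var 0) (Cst 1))) (Plus (Var 0) (Cst 1))))) (Cst 2)) (Cst 1))
  (tEx 2 (Var 1) (tEx 3 (Power (Cst 2) (Times (Var 1) (Plus (Var 0) (Cst 1))))
  (tEx 4 (Power (Cst 2) (Times (Var 1) (Plus (Var 0) (Cst 1))))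
  (tEx 5 (Power tBeta (Var 1)) (tEx 6 (Power (Cst 2) (Times (Times (Plus (Var 0) (Cst 1)) (Var 1)) (Cst 2)))
  (tAnd tTRACE (tAnd tCONSTR fin)))))))"

definition goodH :: "(nat \<Rightarrow> nat \<Rightarrow> nat \<Rightarrow> bool) \<Rightarrow> nat \<Rightarrow> bool" where
  "goodH fin x \<longleftrightarrow> (\<exists>lam<Lmax x + 1. \<exists>k<lam. \<exists>hc<2 ^ (lam * (x + 1)). \<exists>tc<2 ^ (lam * (x + 1)).
     \<exists>ta<(lam * (x + 1) + 1) ^ lam. \<exists>Lc<2 ^ ((x + 1) * lam * 2).
     traceH x lam hc tc ta \<and> constrH x lam hc tc ta Lc \<and> fin lam k Lc)"

lemma hv_tGOOD_taut: "hv (tGOOD (tNot (tLL (Var 0) (Var 2) (Cst 0)))) s =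
   goodH (\<lambda>lam k Lc. \<not> LLof lam Lc (s 0) k 0) (s 0)"
  unfolding tGOOD_def goodH_def Lmax_def
  by (simp add: hv_tTRACE hv_tCONSTR LLof_def)

lemma hv_tGOOD_sat: "hv (tGOOD (tAnd (tEq (Var 2) (Cst 0)) (tLL (Var 0) (Var 2) (Cst 0)))) s =
   goodH (\<lambda>lam k Lc. k = 0 \<and> LLof lam Lc (s 0) k 0) (s 0)"
  unfolding tGOOD_def goodH_def Lmax_def
  by (simp add: hv_tTRACE hv_tCONSTR LLof_def)

lemma fv_tGOOD: "fv (tGOOD (tNot (tLL (Var 0) (Var 2) (Cst 0)))) \<subseteq> {0}"
   "fv (tGOOD (tAnd (tEq (Var 2) (Cst 0)) (tLL (Var 0) (Var 2) (Cst 0)))) \<subseteq> {0}"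
  unfolding tGOOD_def tTRACE_def tCONSTR_def using fv_tSTEP by auto

lemma decidable_via:
  assumes "fv t \<subseteq> {0}" "\<And>\<phi>. ev t (\<lambda>_. enc \<phi>) = (if P \<phi> then 1 else 0)"
  shows "decidable_mform P"
  unfolding decidable_mform_def
proof
  show "\<forall>\<phi>. eval (compile [0] t) [enc \<phi>] (if P \<phi> then 1 else 0)"
  proof
    fix \<phi>
    have "eval (compile [0] t) [enc \<phi>] (ev t (\<lambda>_. enc \<phi>))"
      by (rule comp_correct) (use assms(1) in auto)
    then show "eval (compile [0] t) [enc \<phi>] (if P \<phi> then 1 else 0)" using assms(2) by simp
  qed
qed


definition shiftI :: "nat \<Rightarrow> interval \<Rightarrow> interval" where
  "shiftI d I = (fst I - d, snd I - enat d)"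

lemma in_int_shift: "in_int (shiftI d I) e = in_int I (d + e)"
  by (cases "snd I") (auto simp: shiftI_def in_int_def)

definition U :: "nat \<Rightarrow> (nat \<Rightarrow> nat) \<Rightarrow> interval \<Rightarrow> (nat \<Rightarrow> bool) \<Rightarrow> (nat \<Rightarrow> bool) \<Rightarrow> nat \<Rightarrow> bool" where
  "U lam tau I A B p = (\<exists>w. p \<le> w \<and> w < lam \<and> in_int I (tau w - tau p) \<and> B w \<and> (\<forall>q. p \<le> q \<and> q < w \<longrightarrow> A q))"

definition S :: "(nat \<Rightarrow> nat) \<Rightarrow> interval \<Rightarrow> (nat \<Rightarrow> bool) \<Rightarrow> (nat \<Rightarrow> bool) \<Rightarrow> nat \<Rightarrow> bool" where
  "S tau I A B p = (\<exists>w\<le>p. in_int I (tau p - tau w) \<and> B w \<and> (\<forall>q. w < q \<and> q \<le> p \<longrightarrow> A q))"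

definition HX :: "nat \<Rightarrow> (nat \<Rightarrow> nat set) \<Rightarrow> (nat \<Rightarrow> nat set) \<Rightarrow> nat \<Rightarrow> nat set" where
  "HX X H T = (if X = 0 then H else T)"

lemma HX_Suc[simp]: "HX (Suc n) H T = T" by (simp add: HX_def)
lemma HX_1[simp]: "HX 1 H T = T" and HX_T[simp]: "HX X T T = T" by (auto simp: HX_def)
lemma HX_0[simp]: "HX 0 H T = H" by (simp add: HX_def)

primrec subs :: "mform \<Rightarrow> mform set" where
  "subs (Atom p) = {Atom p}"
| "subs Bot = {Bot}"
| "subs (And a b) = insert (And a b) (subs a \<union> subs b)"
| "subs (Or a b) = insert (Or a b) (subs a \<union> subs b)"
| "subs (Impl a b) = insert (Impl a b) (subs a \<union> subs b)"
| "subs (Prev I a) = insert (Prev I a) (subs a)"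
| "subs (Since I a b) = insert (Since I a b) (subs a \<union> subs b)"
| "subs (Trigger I a b) = insert (Trigger I a b) (subs a \<union> subs b)"
| "subs (Next I a) = insert (Next I a) (subs a)"
| "subs (Until I a b) = insert (Until I a b) (subs a \<union> subs b)"
| "subs (Release I a b) = insert (Release I a b) (subs a \<union> subs b)"

lemma subs_refl: "\<psi> \<in> subs \<psi>" by (cases \<psi>) auto

lemma subs_trans: "\<psi> \<in> subs \<phi> \<Longrightarrow> subs \<psi> \<subseteq> subs \<phi>"
  by (induction \<phi>) auto

lemma finite_subs: "finite (subs \<phi>)" by (induction \<phi>) auto

fun shiftf :: "nat \<Rightarrow> mform \<Rightarrow> mform" where
  "shiftf d (Since I a b) = Since (shiftI d I) a b"
| "shiftf d (Trigger I a b) = Trigger (shiftI d I) a b"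
| "shiftf d (Until I a b) = Until (shiftI d I) a b"
| "shiftf d (Release I a b) = Release (shiftI d I) a b"
| "shiftf d \<psi> = \<psi>"

lemma shiftI_0[simp]: "shiftI 0 I = I" by (cases I) (simp add: shiftI_def zero_enat_def[symmetric])

lemma shiftf_0[simp]: "shiftf 0 \<psi> = \<psi>" by (cases \<psi>) auto

lemma sat_S: "sat H T tau lam k (Since I a b) = S tau I (\<lambda>q. sat H T tau lam q a) (\<lambda>q. sat H T tau lam q b) k"
  by (simp add: S_def)
lemma sat_Tr: "sat H T tau lam k (Trigger I a b) = (\<not> S tau I (\<lambda>q. \<not> sat H T tau lam q a) (\<lambda>q. \<not> sat H T tau lam q b) k)"
  by (auto simp: S_def)
lemma sat_U: "sat H T tau lam k (Until I a b) = U lam tau I (\<lambda>q. sat H T tau lam q a) (\<lambda>q. sat H T tau lam q b) k"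
  by (simp add: U_def)
lemma sat_R: "sat H T tau lam k (Release I a b) = (\<not> U lam tau I (\<lambda>q. \<not> sat H T tau lam q a) (\<lambda>q. \<not> sat H T tau lam q b) k)"
  by (auto simp: U_def)

locale cut_loc =
  fixes lam i j :: nat and tau :: "nat \<Rightarrow> nat"
  assumes ij: "i < j" "j < lam"
    and mono: "\<And>a b. a \<le> b \<Longrightarrow> b < lam \<Longrightarrow> tau a \<le> tau b"
begin

definition "dl = j - i"
definition "lam' = lam - dl"
definition "mp q = (if q \<le> i then q else q + dl)"
definition "tau' q = (if q \<le> i then tau q else tau (q + dl) - (tau j - tau i))"

definition Hm :: "(nat \<Rightarrow> nat set) \<Rightarrow> nat \<Rightarrow> nat set" where "Hm H = (\<lambda>q. H (mp q))"

lemma dl_pos: "0 < dl" and i_dl: "i + dl = j" using ij by (auto simp: dl_def)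

lemma i_lt: "i < lam'" using ij by (auto simp: lam'_def dl_def)

lemma mp_lt: "q < lam' \<Longrightarrow> mp q < lam"
  using ij by (auto simp: mp_def lam'_def dl_def)

lemma mp_hi: "i < q \<Longrightarrow> mp q = q + dl" by (simp add: mp_def)
lemma mp_lo: "q \<le> i \<Longrightarrow> mp q = q" by (simp add: mp_def)

lemma lt_lam': "w < lam' \<longleftrightarrow> w + dl < lam" using ij by (auto simp: lam'_def dl_def)

lemma tau'_lo: "q \<le> i \<Longrightarrow> tau' q = tau q" by (simp add: tau'_def)

lemma tau'_hi_diff: "i < p \<Longrightarrow> p \<le> w \<Longrightarrow> w < lam' \<Longrightarrow> tau' w - tau' p = tau (w + dl) - tau (p + dl)"
proof -
  assume a: "i < p" "p \<le> w" "w < lam'"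
  have "tau j \<le> tau (p + dl)" using a i_dl lt_lam' by (intro mono) auto
  moreover have "tau (p + dl) \<le> tau (w + dl)" using a lt_lam' by (intro mono) auto
  moreover have "tau i \<le> tau j" using ij by (intro mono) auto
  ultimately show ?thesis using a by (simp add: tau'_def)
qed

lemma tau'_mid_diff: "p \<le> i \<Longrightarrow> i < w \<Longrightarrow> w < lam' \<Longrightarrow>
   tau' w - tau' p = (tau (w + dl) - tau j) + (tau i - tau p)"
proof -
  assume a: "p \<le> i" "i < w" "w < lam'"
  have "tau j \<le> tau (w + dl)" using a i_dl lt_lam' by (intro mono) auto
  moreover have "tau p \<le> tau i" using a ij by (intro mono) auto
  moreover have "tau i \<le> tau j" using ij by (intro mono) auto
  ultimately show ?thesis using a by (simp add: tau'_def)
qed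

lemma tau'_mono: "a \<le> b \<Longrightarrow> b < lam' \<Longrightarrow> tau' a \<le> tau' b"
proof -
  assume a: "a \<le> b" "b < lam'"
  have tj: "tau i \<le> tau j" using ij by (intro mono) auto
  show ?thesis
  proof (cases "b \<le> i")
    case True then show ?thesis using a ij by (auto simp: tau'_def intro!: mono)
  next
    case False
    then have "tau j \<le> tau (b + dl)" using a i_dl lt_lam' by (intro mono) auto
    moreover have "a \<le> i \<Longrightarrow> tau a \<le> tau i" using ij by (intro mono) auto
    moreover have "\<not> a \<le> i \<Longrightarrow> tau (a + dl) \<le> tau (b + dl)" using a lt_lam' by (intro mono) auto
    ultimately show ?thesis using False tj by (auto simp: tau'_def)
  qed
qed

lemma until_cut:
  assumes A': "\<And>q. q < lam' \<Longrightarrow> A' q = A (mp q)" and B': "\<And>q. q < lam' \<Longrightarrow> B' q = B (mp q)"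
    and Aij: "A i = A j" and Bij: "B i = B j"
    and Uij: "\<And>D. U lam tau (shiftI D I) A B i = U lam tau (shiftI D I) A B j"
    and p: "p < lam'"
  shows "U lam' tau' I A' B' p = U lam tau I A B (mp p)"
proof (cases "i < p")
  case True
  have mpp: "mp p = p + dl" using True by (simp add: mp_def)
  show ?thesis unfolding mpp
  proof
    assume "U lam' tau' I A' B' p"
    then obtain w where w: "p \<le> w" "w < lam'" "in_int I (tau' w - tau' p)" "B' w"
      "\<forall>q. p \<le> q \<and> q < w \<longrightarrow> A' q" unfolding U_def by blast
    show "U lam tau I A B (p + dl)" unfolding U_def
    proof (intro exI[of _ "w + dl"] conjI allI impI)
      show "p + dl \<le> w + dl" "w + dl < lam" using w lt_lam' by auto
      show "in_int I (tau (w + dl) - tau (p + dl))" using w True tau'_hi_diff by simp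
      show "B (w + dl)" using w B'[of w] True by (simp add: mp_def)
      fix q assume q: "p + dl \<le> q \<and> q < w + dl"
      then have "p \<le> q - dl" "q - dl < w" by auto
      then have "A' (q - dl)" using w(5) by blast
      moreover have "mp (q - dl) = q" using q True by (auto simp: mp_def)
      ultimately show "A q" using A'[of "q - dl"] q w by auto
    qed
  next
    assume "U lam tau I A B (p + dl)"
    then obtain w where w: "p + dl \<le> w" "w < lam" "in_int I (tau w - tau (p + dl))" "B w"
      "\<forall>q. p + dl \<le> q \<and> q < w \<longrightarrow> A q" unfolding U_def by blast
    show "U lam' tau' I A' B' p" unfolding U_def
    proof (intro exI[of _ "w - dl"] conjI allI impI)
      show "p \<le> w - dl" "w - dl < lam'" using w lt_lam' by auto
      show "in_int I (tau' (w - dl) - tau' p)" using w True tau'_hi_diff[of p "w - dl"] lt_lam' by auto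
      show "B' (w - dl)" using w B'[of "w - dl"] True lt_lam' by (auto simp: mp_def)
      fix q assume q: "p \<le> q \<and> q < w - dl"
      then show "A' q" using w A'[of q] True lt_lam' by (auto simp: mp_def)
    qed
  qed
next
  case False
  then have pi: "p \<le> i" by simp
  have mpp: "mp p = p" using pi by (simp add: mp_def)
  define D where "D = tau i - tau p"
  have tpi: "tau p \<le> tau i" using pi ij by (intro mono) auto
  show ?thesis unfolding mpp
  proof
    assume "U lam' tau' I A' B' p"
    then obtain w where w: "p \<le> w" "w < lam'" "in_int I (tau' w - tau' p)" "B' w"
      "\<forall>q. p \<le> q \<and> q < w \<longrightarrow> A' q" unfolding U_def by blast
    show "U lam tau I A B p"
    proof (cases "w \<le> i")
      case True
      show ?thesis unfolding U_def
      proof (intro exI[of _ w] conjI allI impI)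
        show "p \<le> w" "w < lam" using w True ij by auto
        show "in_int I (tau w - tau p)" using w True pi by (simp add: tau'_lo)
        show "B w" using w B'[of w] True by (simp add: mp_def)
        fix q assume "p \<le> q \<and> q < w" then show "A q" using w A'[of q] True by (auto simp: mp_def)
      qed
    next
      case False
      have Aj: "U lam tau (shiftI D I) A B j" unfolding U_def
      proof (intro exI[of _ "w + dl"] conjI allI impI)
        show "j \<le> w + dl" "w + dl < lam" using w False lt_lam' i_dl by auto
        show "in_int (shiftI D I) (tau (w + dl) - tau j)"
          using w False pi tau'_mid_diff[of p w] by (simp add: in_int_shift D_def add.commute)
        show "B (w + dl)" using w B'[of w] False by (simp add: mp_def)
        fix q assume q: "j \<le> q \<and> q < w + dl"
        show "A q"
        proof (cases "q = j")
          case True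
          have "A' i" using w pi False by auto
          then show ?thesis using A'[of i] i_lt Aij True by (simp add: mp_def)
        next
          case False
          then have "i < q - dl" "q - dl < w" using q i_dl by auto
          then have "A' (q - dl)" using w pi by auto
          moreover have "mp (q - dl) = q" using \<open>i < q - dl\<close> by (auto simp: mp_def)
          ultimately show "A q" using A'[of "q - dl"] \<open>q - dl < w\<close> w by auto
        qed
      qed
      then have "U lam tau (shiftI D I) A B i" using Uij by simp
      then obtain w2 where w2: "i \<le> w2" "w2 < lam" "in_int (shiftI D I) (tau w2 - tau i)" "B w2"
        "\<forall>q. i \<le> q \<and> q < w2 \<longrightarrow> A q" unfolding U_def by blast
      have tw2: "tau i \<le> tau w2" using w2 by (intro mono) auto
      show ?thesis unfolding U_def
      proof (intro exI[of _ w2] conjI allI impI)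
        show "p \<le> w2" "w2 < lam" using w2 pi by auto
        show "in_int I (tau w2 - tau p)" using w2 tpi tw2 by (simp add: in_int_shift D_def)
        show "B w2" by (rule w2)
        fix q assume q: "p \<le> q \<and> q < w2"
        show "A q"
        proof (cases "q < i")
          case True
          then have "A' q" using w q False by auto
          then show ?thesis using A'[of q] True i_lt by (simp add: mp_def)
        next
          case False then show ?thesis using w2 q by auto
        qed
      qed
    qed
  next
    assume "U lam tau I A B p"
    then obtain w where w: "p \<le> w" "w < lam" "in_int I (tau w - tau p)" "B w"
      "\<forall>q. p \<le> q \<and> q < w \<longrightarrow> A q" unfolding U_def by blast
    show "U lam' tau' I A' B' p"
    proof (cases "w \<le> i")
      case True
      show ?thesis unfolding U_def
      proof (intro exI[of _ w] conjI allI impI)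
        show "p \<le> w" "w < lam'" using w True i_lt by auto
        show "in_int I (tau' w - tau' p)" using w True pi by (simp add: tau'_lo)
        show "B' w" using w B'[of w] True i_lt by (simp add: mp_def)
        fix q assume "p \<le> q \<and> q < w" then show "A' q" using w A'[of q] True i_lt by (auto simp: mp_def)
      qed
    next
      case False
      have twi: "tau i \<le> tau w" using w False by (intro mono) auto
      have "U lam tau (shiftI D I) A B i" unfolding U_def
      proof (intro exI[of _ w] conjI allI impI)
        show "i \<le> w" "w < lam" using w False by auto
        show "in_int (shiftI D I) (tau w - tau i)" using w twi tpi by (simp add: in_int_shift D_def)
        show "B w" by (rule w)
        fix q assume "i \<le> q \<and> q < w" then show "A q" using w pi by auto
      qed
      then have "U lam tau (shiftI D I) A B j" using Uij by simp
      then obtain w2 where w2: "j \<le> w2" "w2 < lam" "in_int (shiftI D I) (tau w2 - tau j)" "B w2"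
        "\<forall>q. j \<le> q \<and> q < w2 \<longrightarrow> A q" unfolding U_def by blast
      have w2l: "w2 - dl < lam'" "i \<le> w2 - dl" using w2 lt_lam' i_dl by auto
      show ?thesis unfolding U_def
      proof (intro exI[of _ "w2 - dl"] conjI allI impI)
        show "p \<le> w2 - dl" "w2 - dl < lam'" using w2l pi by auto
        show "in_int I (tau' (w2 - dl) - tau' p)"
        proof (cases "w2 = j")
          case True
          then have "w2 - dl = i" using i_dl by auto
          then show ?thesis using w2 True pi by (simp add: tau'_lo in_int_shift D_def)
        next
          case False
          then have "i < w2 - dl" using w2 i_dl by auto
          then show ?thesis using w2 pi tau'_mid_diff[of p "w2 - dl"] w2l i_dl
            by (simp add: in_int_shift D_def add.commute)
        qed
        show "B' (w2 - dl)"
        proof (cases "w2 = j")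
          case True
          then have "w2 - dl = i" using i_dl by auto
          then show ?thesis using w2 True B'[of i] i_lt Bij by (simp add: mp_def)
        next
          case False
          then have "i < w2 - dl" using w2 i_dl by auto
          then show ?thesis using w2 B'[of "w2 - dl"] w2l i_dl by (simp add: mp_def)
        qed
        fix q assume q: "p \<le> q \<and> q < w2 - dl"
        show "A' q"
        proof (cases "q \<le> i")
          case True
          then have "A q" using w q False by auto
          then show ?thesis using A'[of q] True i_lt by (simp add: mp_def)
        next
          case nq: False
          then have "A (q + dl)" using w2 q i_dl by auto
          then show ?thesis using A'[of q] nq q w2l by (simp add: mp_def)
        qed
      qed
    qed
  qed
qed

lemma since_cut:
  assumes A': "\<And>q. q < lam' \<Longrightarrow> A' q = A (mp q)" and B': "\<And>q. q < lam' \<Longrightarrow> B' q = B (mp q)"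
    and Sij: "\<And>D. S tau (shiftI D I) A B i = S tau (shiftI D I) A B j"
    and p: "p < lam'"
  shows "S tau' I A' B' p = S tau I A B (mp p)"
proof (cases "i < p")
  case False
  then have pi: "p \<le> i" by simp
  have mpp: "mp p = p" using pi by (simp add: mp_def)
  have eA: "\<And>q. q \<le> p \<Longrightarrow> A' q = A q" using A' pi i_lt by (auto simp: mp_def)
  have eB: "\<And>q. q \<le> p \<Longrightarrow> B' q = B q" using B' pi i_lt by (auto simp: mp_def)
  have eT: "\<And>q. q \<le> p \<Longrightarrow> tau' q = tau q" using pi by (auto simp: tau'_def)
  show ?thesis unfolding mpp S_def using eA eB eT pi
    by (auto cong: conj_cong imp_cong)
next
  case True
  define P where "P = p + dl"
  have mpp: "mp p = P" using True by (simp add: mp_def P_def)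
  have Pl: "P < lam" using p lt_lam' P_def by auto
  have jP: "j < P" using True i_dl P_def by auto
  define D where "D = tau P - tau j"
  have tjP: "tau j \<le> tau P" using jP Pl by (intro mono) auto
  have tij: "tau i \<le> tau j" using ij by (intro mono) auto
  show ?thesis unfolding mpp
  proof
    assume "S tau' I A' B' p"
    then obtain w where w: "w \<le> p" "in_int I (tau' p - tau' w)" "B' w"
      "\<forall>q. w < q \<and> q \<le> p \<longrightarrow> A' q" unfolding S_def by blast
    show "S tau I A B P"
    proof (cases "i < w")
      case True
      show ?thesis unfolding S_def
      proof (intro exI[of _ "w + dl"] conjI allI impI)
        show "w + dl \<le> P" using w P_def by auto
        show "in_int I (tau P - tau (w + dl))" using w True tau'_hi_diff[of w p] p P_def by simp
        show "B (w + dl)" using w B'[of w] True p by (simp add: mp_def)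
        fix q assume q: "w + dl < q \<and> q \<le> P"
        then have "w < q - dl" "q - dl \<le> p" using P_def by auto
        then have "A' (q - dl)" using w(4) by blast
        moreover have "mp (q - dl) = q" using q True by (auto simp: mp_def)
        ultimately show "A q" using A'[of "q - dl"] \<open>q - dl \<le> p\<close> p by auto
      qed
    next
      case False
      have twi: "tau w \<le> tau i" using False ij by (intro mono) auto
      have "S tau (shiftI D I) A B i" unfolding S_def
      proof (intro exI[of _ w] conjI allI impI)
        show "w \<le> i" using False by simp
        show "in_int (shiftI D I) (tau i - tau w)"
          using w False True tau'_mid_diff[of w p] p by (simp add: in_int_shift D_def P_def add.commute)
        show "B w" using w B'[of w] False p by (simp add: mp_def)
        fix q assume q: "w < q \<and> q \<le> i"
        then have "A' q" using w True by auto
        then show "A q" using A'[of q] q i_lt by (simp add: mp_def)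
      qed
      then have "S tau (shiftI D I) A B j" using Sij by simp
      then obtain w2 where w2: "w2 \<le> j" "in_int (shiftI D I) (tau j - tau w2)" "B w2"
        "\<forall>q. w2 < q \<and> q \<le> j \<longrightarrow> A q" unfolding S_def by blast
      have tw2: "tau w2 \<le> tau j" using w2 ij by (intro mono) auto
      show ?thesis unfolding S_def
      proof (intro exI[of _ w2] conjI allI impI)
        show "w2 \<le> P" using w2 jP by auto
        show "in_int I (tau P - tau w2)" using w2 tjP tw2 by (simp add: in_int_shift D_def)
        show "B w2" by (rule w2)
        fix q assume q: "w2 < q \<and> q \<le> P"
        show "A q"
        proof (cases "q \<le> j")
          case True then show ?thesis using w2 q by auto
        next
          case nj: False
          then have "i < q - dl" "q - dl \<le> p" using q i_dl P_def by auto
          moreover have "w < q - dl" using \<open>i < q - dl\<close> False by auto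
          ultimately have "A' (q - dl)" using w(4) by blast
          moreover have "mp (q - dl) = q" using \<open>i < q - dl\<close> by (auto simp: mp_def)
          ultimately show "A q" using A'[of "q - dl"] \<open>q - dl \<le> p\<close> p by auto
        qed
      qed
    qed
  next
    assume "S tau I A B P"
    then obtain w where w: "w \<le> P" "in_int I (tau P - tau w)" "B w"
      "\<forall>q. w < q \<and> q \<le> P \<longrightarrow> A q" unfolding S_def by blast
    show "S tau' I A' B' p"
    proof (cases "j < w")
      case True
      show ?thesis unfolding S_def
      proof (intro exI[of _ "w - dl"] conjI allI impI)
        show "w - dl \<le> p" using w P_def by auto
        have "i < w - dl" using True i_dl by auto
        then show "in_int I (tau' p - tau' (w - dl))" using w tau'_hi_diff[of "w - dl" p] p P_def True i_dl
          by simp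
        show "B' (w - dl)" using w B'[of "w - dl"] \<open>i < w - dl\<close> p P_def by (simp add: mp_def)
        fix q assume q: "w - dl < q \<and> q \<le> p"
        then have "A (q + dl)" using w P_def True i_dl by auto
        then show "A' q" using A'[of q] q p \<open>i < w - dl\<close> by (simp add: mp_def)
      qed
    next
      case False
      have twj: "tau w \<le> tau j" using False ij by (intro mono) auto
      have "S tau (shiftI D I) A B j" unfolding S_def
      proof (intro exI[of _ w] conjI allI impI)
        show "w \<le> j" using False by simp
        show "in_int (shiftI D I) (tau j - tau w)" using w twj tjP by (simp add: in_int_shift D_def)
        show "B w" by (rule w)
        fix q assume "w < q \<and> q \<le> j" then show "A q" using w jP by auto
      qed
      then have "S tau (shiftI D I) A B i" using Sij by simp
      then obtain w2 where w2: "w2 \<le> i" "in_int (shiftI D I) (tau i - tau w2)" "B w2"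
        "\<forall>q. w2 < q \<and> q \<le> i \<longrightarrow> A q" unfolding S_def by blast
      show ?thesis unfolding S_def
      proof (intro exI[of _ w2] conjI allI impI)
        show "w2 \<le> p" using w2 True by auto
        show "in_int I (tau' p - tau' w2)" using w2 True tau'_mid_diff[of w2 p] p
          by (simp add: in_int_shift D_def P_def add.commute)
        show "B' w2" using w2 B'[of w2] i_lt by (simp add: mp_def)
        fix q assume q: "w2 < q \<and> q \<le> p"
        show "A' q"
        proof (cases "q \<le> i")
          case True then show ?thesis using w2 q A'[of q] i_lt by (simp add: mp_def)
        next
          case ni: False
          then have "A (q + dl)" using w q False i_dl P_def by auto
          then show ?thesis using A'[of q] ni q p by (simp add: mp_def)
        qed
      qed
    qed
  qed
qed

lemma cut_sat:
  assumes ty: "\<And>\<psi> d X. \<psi> \<in> subs \<phi> \<Longrightarrow> X < 2 \<Longrightarrow>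
      sat (HX X H T) T tau lam i (shiftf d \<psi>) = sat (HX X H T) T tau lam j (shiftf d \<psi>)"
  shows "\<psi> \<in> subs \<phi> \<Longrightarrow> q < lam' \<Longrightarrow> X < 2 \<Longrightarrow>
    sat (HX X (Hm H) (Hm T)) (Hm T) tau' lam' q \<psi> = sat (HX X H T) T tau lam (mp q) \<psi>"
proof (induction \<psi> arbitrary: q X)
  case (Atom a)
  then show ?case by (simp add: HX_def Hm_def)
next
  case Bot
  then show ?case by simp
next
  case (And a b)
  have s: "a \<in> subs \<phi>" "b \<in> subs \<phi>" using subs_trans[OF And.prems(1)] subs_refl by auto
  show ?case using And.IH(1)[OF s(1) And.prems(2,3)] And.IH(2)[OF s(2) And.prems(2,3)] by simp
next
  case (Or a b)
  have s: "a \<in> subs \<phi>" "b \<in> subs \<phi>" using subs_trans[OF Or.prems(1)] subs_refl by auto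
  show ?case using Or.IH(1)[OF s(1) Or.prems(2,3)] Or.IH(2)[OF s(2) Or.prems(2,3)] by simp
next
  case (Impl a b)
  have s: "a \<in> subs \<phi>" "b \<in> subs \<phi>" using subs_trans[OF Impl.prems(1)] subs_refl by auto
  show ?case using Impl.IH(1)[OF s(1) Impl.prems(2), of X] Impl.IH(2)[OF s(2) Impl.prems(2), of X]
     Impl.IH(1)[OF s(1) Impl.prems(2), of 1] Impl.IH(2)[OF s(2) Impl.prems(2), of 1] Impl.prems(3)
    by simp
next
  case (Prev I a)
  have s: "a \<in> subs \<phi>" using subs_trans[OF Prev.prems(1)] subs_refl by auto
  have IH: "\<And>q. q < lam' \<Longrightarrow> sat (HX X (Hm H) (Hm T)) (Hm T) tau' lam' q a = sat (HX X H T) T tau lam (mp q) a"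
    using Prev.IH[OF s] Prev.prems(3) by blast
  have l: "q - 1 < lam'" using Prev.prems(2) by simp
  have z: "0 < q \<longleftrightarrow> 0 < mp q" by (auto simp: mp_def)
  have st: "sat (HX X (Hm H) (Hm T)) (Hm T) tau' lam' (q - 1) a = sat (HX X H T) T tau lam (mp q - 1) a
     \<and> tau' q - tau' (q - 1) = tau (mp q) - tau (mp q - 1)" if q0: "0 < q"
  proof -
    consider "q \<le> i" | "q = Suc i" | "Suc i < q" by linarith
    then show ?thesis
    proof cases
      case 1
      have e: "mp q = q" "mp (q - 1) = q - 1" "tau' q = tau q" "tau' (q - 1) = tau (q - 1)"
        using 1 by (auto simp: mp_lo tau'_lo)
      show ?thesis using IH[OF l] e by simp
    next
      case 2
      have mq: "mp q = Suc j" "mp (q - 1) = i" using 2 i_dl by (auto simp: mp_def)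
      have t: "tau' q - tau' (q - 1) = tau (Suc j) - tau j"
        using 2 i_dl tau'_def mono[of i j] mono[of j "Suc j"] ij Prev.prems(2) lt_lam' by auto
      have "sat (HX X H T) T tau lam i a = sat (HX X H T) T tau lam j a"
        using ty[OF s Prev.prems(3), of 0] by simp
      then show ?thesis using IH[OF l] mq t by simp
    next
      case 3
      have mq: "mp q = q + dl" "mp (q - 1) = q - 1 + dl" using 3 by (auto simp: mp_def)
      have t: "tau' q - tau' (q - 1) = tau (q + dl) - tau (q - 1 + dl)"
        using tau'_hi_diff[of "q - 1" q] 3 Prev.prems(2) by auto
      have "q - 1 + dl = q + dl - 1" using 3 by simp
      then show ?thesis using IH[OF l] mq t by simp
    qed
  qed
  show ?case
  proof (cases "0 < q")
    case True
    then show ?thesis using st[OF True] z by (simp only: sat.simps)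
  next
    case False
    then show ?thesis using z by (simp only: sat.simps) simp
  qed
next
  case (Next I a)
  have s: "a \<in> subs \<phi>" using subs_trans[OF Next.prems(1)] subs_refl by auto
  have IH: "\<And>q. q < lam' \<Longrightarrow> sat (HX X (Hm H) (Hm T)) (Hm T) tau' lam' q a = sat (HX X H T) T tau lam (mp q) a"
    using Next.IH[OF s] Next.prems(3) by blast
  consider "q < i" | "q = i" | "i < q" by linarith
  then show ?case
  proof cases
    case 1
    have e: "mp q = q" "mp (q + 1) = q + 1" "tau' q = tau q" "tau' (q + 1) = tau (q + 1)"
      using 1 by (auto simp: mp_lo tau'_lo)
    have l: "q + 1 < lam'" "q + 1 < lam" using 1 i_lt ij by auto
    have "sat (HX X (Hm H) (Hm T)) (Hm T) tau' lam' (q + 1) a = sat (HX X H T) T tau lam (q + 1) a"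
      using IH[OF l(1)] e by simp
    then show ?thesis using e l by (simp only: sat.simps)
  next
    case 2
    have l: "Suc i < lam' \<longleftrightarrow> Suc j < lam" using lt_lam' i_dl by auto
    have new: "sat (HX X (Hm H) (Hm T)) (Hm T) tau' lam' i (Next I a) = sat (HX X H T) T tau lam j (Next I a)"
    proof (cases "Suc j < lam")
      case True
      have mq: "mp (Suc i) = Suc j" using i_dl by (simp add: mp_def)
      have t: "tau' (Suc i) - tau' i = tau (Suc j) - tau j"
        using i_dl tau'_def mono[of i j] mono[of j "Suc j"] ij True by auto
      have "sat (HX X (Hm H) (Hm T)) (Hm T) tau' lam' (Suc i) a = sat (HX X H T) T tau lam (Suc j) a"
        using IH[of "Suc i"] l True mq by simp
      then show ?thesis using t l True by (simp only: sat.simps Suc_eq_plus1[symmetric])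
    next
      case False
      then show ?thesis using l by simp
    qed
    have "sat (HX X H T) T tau lam i (Next I a) = sat (HX X H T) T tau lam j (Next I a)"
      using ty[OF Next.prems(1,3), of 0] by simp
    then show ?thesis using new 2 by (simp add: mp_lo)
  next
    case 3
    have mq: "mp q = q + dl" "mp (q + 1) = q + 1 + dl" using 3 by (auto simp: mp_def)
    have l: "q + 1 < lam' \<longleftrightarrow> q + 1 + dl < lam" using lt_lam' by auto
    show ?thesis
    proof (cases "q + 1 < lam'")
      case True
      have t: "tau' (q + 1) - tau' q = tau (q + 1 + dl) - tau (q + dl)"
        using tau'_hi_diff[of q "q + 1"] 3 True by auto
      have "sat (HX X (Hm H) (Hm T)) (Hm T) tau' lam' (q + 1) a = sat (HX X H T) T tau lam (q + 1 + dl) a"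
        using IH[OF True] mq by simp
      moreover have "q + 1 + dl = q + dl + 1" by simp
      ultimately show ?thesis using t l True mq by (simp only: sat.simps)
    next
      case False
      then show ?thesis using l mq by simp
    qed
  qed
next
  case (Since I a b)
  have s: "a \<in> subs \<phi>" "b \<in> subs \<phi>" using subs_trans[OF Since.prems(1)] subs_refl by auto
  show ?case unfolding sat_S
  proof (rule since_cut)
    show "q < lam'" by (rule Since.prems)
    fix q assume "q < lam'"
    then show "sat (HX X (Hm H) (Hm T)) (Hm T) tau' lam' q a = sat (HX X H T) T tau lam (mp q) a"
      "sat (HX X (Hm H) (Hm T)) (Hm T) tau' lam' q b = sat (HX X H T) T tau lam (mp q) b"
      using Since.IH s Since.prems(3) by auto
  next
    fix D show "S tau (shiftI D I) (\<lambda>q. sat (HX X H T) T tau lam q a) (\<lambda>q. sat (HX X H T) T tau lam q b) i =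
      S tau (shiftI D I) (\<lambda>q. sat (HX X H T) T tau lam q a) (\<lambda>q. sat (HX X H T) T tau lam q b) j"
      using ty[OF Since.prems(1,3), of D] unfolding shiftf.simps sat_S by blast
  qed
next
  case (Trigger I a b)
  have s: "a \<in> subs \<phi>" "b \<in> subs \<phi>" using subs_trans[OF Trigger.prems(1)] subs_refl by auto
  have "S tau' I (\<lambda>q. \<not> sat (HX X (Hm H) (Hm T)) (Hm T) tau' lam' q a)
      (\<lambda>q. \<not> sat (HX X (Hm H) (Hm T)) (Hm T) tau' lam' q b) q =
    S tau I (\<lambda>q. \<not> sat (HX X H T) T tau lam q a) (\<lambda>q. \<not> sat (HX X H T) T tau lam q b) (mp q)"
  proof (rule since_cut)
    show "q < lam'" by (rule Trigger.prems)
    fix q assume "q < lam'"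
    then show "(\<not> sat (HX X (Hm H) (Hm T)) (Hm T) tau' lam' q a) = (\<not> sat (HX X H T) T tau lam (mp q) a)"
      "(\<not> sat (HX X (Hm H) (Hm T)) (Hm T) tau' lam' q b) = (\<not> sat (HX X H T) T tau lam (mp q) b)"
      using Trigger.IH s Trigger.prems(3) by auto
  next
    fix D show "S tau (shiftI D I) (\<lambda>q. \<not> sat (HX X H T) T tau lam q a) (\<lambda>q. \<not> sat (HX X H T) T tau lam q b) i =
      S tau (shiftI D I) (\<lambda>q. \<not> sat (HX X H T) T tau lam q a) (\<lambda>q. \<not> sat (HX X H T) T tau lam q b) j"
      using ty[OF Trigger.prems(1,3), of D] unfolding shiftf.simps sat_Tr by blast
  qed
  then show ?case unfolding sat_Tr by simp
next
  case (Until I a b)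
  have s: "a \<in> subs \<phi>" "b \<in> subs \<phi>" using subs_trans[OF Until.prems(1)] subs_refl by auto
  show ?case unfolding sat_U
  proof (rule until_cut)
    show "q < lam'" by (rule Until.prems)
    fix q assume "q < lam'"
    then show "sat (HX X (Hm H) (Hm T)) (Hm T) tau' lam' q a = sat (HX X H T) T tau lam (mp q) a"
      "sat (HX X (Hm H) (Hm T)) (Hm T) tau' lam' q b = sat (HX X H T) T tau lam (mp q) b"
      using Until.IH s Until.prems(3) by auto
  next
    show "sat (HX X H T) T tau lam i a = sat (HX X H T) T tau lam j a"
      using ty[OF s(1) Until.prems(3), of 0] by simp
    show "sat (HX X H T) T tau lam i b = sat (HX X H T) T tau lam j b"
      using ty[OF s(2) Until.prems(3), of 0] by simp
  next
    fix D show "U lam tau (shiftI D I) (\<lambda>q. sat (HX X H T) T tau lam q a) (\<lambda>q. sat (HX X H T) T tau lam q b) i =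
      U lam tau (shiftI D I) (\<lambda>q. sat (HX X H T) T tau lam q a) (\<lambda>q. sat (HX X H T) T tau lam q b) j"
      using ty[OF Until.prems(1,3), of D] unfolding shiftf.simps sat_U by blast
  qed
next
  case (Release I a b)
  have s: "a \<in> subs \<phi>" "b \<in> subs \<phi>" using subs_trans[OF Release.prems(1)] subs_refl by auto
  have "U lam' tau' I (\<lambda>q. \<not> sat (HX X (Hm H) (Hm T)) (Hm T) tau' lam' q a)
      (\<lambda>q. \<not> sat (HX X (Hm H) (Hm T)) (Hm T) tau' lam' q b) q =
    U lam tau I (\<lambda>q. \<not> sat (HX X H T) T tau lam q a) (\<lambda>q. \<not> sat (HX X H T) T tau lam q b) (mp q)"
  proof (rule until_cut)
    show "q < lam'" by (rule Release.prems)
    fix q assume "q < lam'"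
    then show "(\<not> sat (HX X (Hm H) (Hm T)) (Hm T) tau' lam' q a) = (\<not> sat (HX X H T) T tau lam (mp q) a)"
      "(\<not> sat (HX X (Hm H) (Hm T)) (Hm T) tau' lam' q b) = (\<not> sat (HX X H T) T tau lam (mp q) b)"
      using Release.IH s Release.prems(3) by auto
  next
    show "(\<not> sat (HX X H T) T tau lam i a) = (\<not> sat (HX X H T) T tau lam j a)"
      using ty[OF s(1) Release.prems(3), of 0] by simp
    show "(\<not> sat (HX X H T) T tau lam i b) = (\<not> sat (HX X H T) T tau lam j b)"
      using ty[OF s(2) Release.prems(3), of 0] by simp
  next
    fix D show "U lam tau (shiftI D I) (\<lambda>q. \<not> sat (HX X H T) T tau lam q a) (\<lambda>q. \<not> sat (HX X H T) T tau lam q b) i =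
      U lam tau (shiftI D I) (\<lambda>q. \<not> sat (HX X H T) T tau lam q a) (\<lambda>q. \<not> sat (HX X H T) T tau lam q b) j"
      using ty[OF Release.prems(1,3), of D] unfolding shiftf.simps sat_R by blast
  qed
  then show ?case unfolding sat_R by simp
qed

end


lemma trace_mono: "timed_ht_trace H T tau lam \<Longrightarrow> a \<le> b \<Longrightarrow> b < lam \<Longrightarrow> tau a \<le> tau b"
proof (induction b)
  case 0 then show ?case by simp
next
  case (Suc b)
  show ?case
  proof (cases "a = Suc b")
    case False
    then have "tau a \<le> tau b" using Suc by auto
    moreover have "tau b \<le> tau (Suc b)" using Suc.prems unfolding timed_ht_trace_def by auto
    ultimately show ?thesis by simp
  qed simp
qed

definition bndI :: "nat \<Rightarrow> interval \<Rightarrow> bool" where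
  "bndI c I \<longleftrightarrow> fst I \<le> c \<and> (\<forall>n. snd I = enat n \<longrightarrow> n \<le> c)"

lemma in_int_clip: "bndI c I \<Longrightarrow> in_int I (d + e) = in_int I (min d c + e)"
  by (cases "snd I") (auto simp: bndI_def in_int_def min_def)

lemma in_int_shift_clip: "bndI c I \<Longrightarrow> in_int (shiftI d I) e = in_int (shiftI (min d c) I) e"
  unfolding in_int_shift by (rule in_int_clip)

lemma enc_int_bnd: "bndI (enc_int I) I"
proof (cases I)
  case (Pair m n)
  have "m \<le> enc_int I" unfolding Pair enc_int_def by (simp add: le_prod_encode_1)
  moreover have "n0 \<le> enc_int I" if "n = enat n0" for n0
  proof -
    have "Suc n0 \<le> prod_encode (m, Suc n0)" by (rule le_prod_encode_2)
    then show ?thesis unfolding Pair enc_int_def using that by simp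
  qed
  ultimately show ?thesis unfolding bndI_def Pair by auto
qed

lemma enc_subs: "\<psi> \<in> subs \<phi> \<Longrightarrow> enc \<psi> \<le> enc \<phi>"
  by (induction \<phi>) (auto intro: order.trans[OF _ le_prod_encode_2] order.trans[OF _ le_prod_encode_1])

lemma bndI_mono: "bndI c I \<Longrightarrow> c \<le> c' \<Longrightarrow> bndI c' I" by (auto simp: bndI_def)

lemma enc_int_le:
  "enc_int I \<le> enc (Since I a b)" "enc_int I \<le> enc (Trigger I a b)"
  "enc_int I \<le> enc (Until I a b)" "enc_int I \<le> enc (Release I a b)"
  "enc_int I \<le> enc (Prev I a)" "enc_int I \<le> enc (Next I a)"
  by simp_all (meson le_prod_encode_1 le_prod_encode_2 order.trans)+

lemma sat_shiftf_clip:
  assumes "\<psi> \<in> subs \<phi>"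
  shows "sat H T tau lam p (shiftf d \<psi>) = sat H T tau lam p (shiftf (min d (enc \<phi>)) \<psi>)"
proof -
  have e: "enc \<psi> \<le> enc \<phi>" by (rule enc_subs[OF assms])
  have b: "in_int (shiftI d I) = in_int (shiftI (min d (enc \<phi>)) I)" if "enc_int I \<le> enc \<psi>" for I
  proof -
    have "bndI (enc \<phi>) I" using bndI_mono[OF enc_int_bnd[of I]] that e by simp
    then show ?thesis using in_int_shift_clip by blast
  qed
  show ?thesis
  proof (cases \<psi>)
    case (Since I a b)
    then have E: "in_int (shiftI d I) = in_int (shiftI (min d (enc \<phi>)) I)" using b enc_int_le by blast
    show ?thesis unfolding Since by (simp only: shiftf.simps sat.simps E)
  next
    case (Trigger I a b)
    then have E: "in_int (shiftI d I) = in_int (shiftI (min d (enc \<phi>)) I)" using b enc_int_le by blast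
    show ?thesis unfolding Trigger by (simp only: shiftf.simps sat.simps E)
  next
    case (Until I a b)
    then have E: "in_int (shiftI d I) = in_int (shiftI (min d (enc \<phi>)) I)" using b enc_int_le by blast
    show ?thesis unfolding Until by (simp only: shiftf.simps sat.simps E)
  next
    case (Release I a b)
    then have E: "in_int (shiftI d I) = in_int (shiftI (min d (enc \<phi>)) I)" using b enc_int_le by blast
    show ?thesis unfolding Release by (simp only: shiftf.simps sat.simps E)
  qed simp_all
qed

definition tyset :: "mform \<Rightarrow> (nat \<Rightarrow> nat set) \<Rightarrow> (nat \<Rightarrow> nat set) \<Rightarrow> (nat \<Rightarrow> nat) \<Rightarrow> nat \<Rightarrow> nat \<Rightarrow> (mform \<times> nat \<times> nat) set" where
  "tyset \<phi> H T tau lam p = {(\<psi>, d, X). \<psi> \<in> subs \<phi> \<and> d \<le> enc \<phi> \<and> X < 2 \<and> sat (HX X H T) T tau lam p (shiftf d \<psi>)}"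

lemma enc_inj: "enc a = enc b \<Longrightarrow> a = b"
proof (induction a arbitrary: b)
  case (Atom x) then show ?case by (cases b) auto
next
  case Bot then show ?case by (cases b) auto
qed (case_tac b; auto simp: enc_int_def split: enat.splits; metis enat.exhaust prod.collapse)+

lemma card_subs: "card (subs \<phi>) \<le> enc \<phi> + 1"
proof -
  have "inj_on enc (subs \<phi>)" by (rule inj_onI) (rule enc_inj)
  then have "card (subs \<phi>) = card (enc ` subs \<phi>)" by (simp add: card_image)
  also have "\<dots> \<le> card {..enc \<phi>}" by (rule card_mono) (auto simp: enc_subs)
  finally show ?thesis by simp
qed

definition N0 :: "nat \<Rightarrow> nat" where "N0 x = 2 ^ (2 * (x + 1) * (x + 1))"

lemma pigeon:
  fixes P :: "nat set"
  assumes UU: "finite UU" and f: "\<forall>p\<in>P. f p \<subseteq> UU" and c: "2 ^ card UU < card P"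
  shows "\<exists>i\<in>P. \<exists>j\<in>P. i < j \<and> f i = f j"
proof (rule ccontr)
  assume "\<not> ?thesis"
  then have "inj_on f P"
  proof (intro inj_onI)
    fix x y assume a: "\<not> (\<exists>i\<in>P. \<exists>j\<in>P. i < j \<and> f i = f j)" "x \<in> P" "y \<in> P" "f x = f y"
    show "x = y"
    proof (rule ccontr)
      assume "x \<noteq> y"
      then have "x < y \<or> y < x" by arith
      then show False using a by metis
    qed
  qed
  then have "card P = card (f ` P)" by (simp add: card_image)
  also have "\<dots> \<le> card (Pow UU)" using f UU by (intro card_mono) auto
  also have "\<dots> = 2 ^ card UU" using UU by (simp add: card_Pow)
  finally show False using c by simp
qed

lemma tyset_card: "2 ^ card (subs \<phi> \<times> {..enc \<phi>} \<times> {..<2::nat}) \<le> N0 (enc \<phi>)"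
proof -
  have "card (subs \<phi> \<times> {..enc \<phi>} \<times> {..<2::nat}) = card (subs \<phi>) * (enc \<phi> + 1) * 2"
    by (simp add: card_cartesian_product)
  also have "\<dots> \<le> (enc \<phi> + 1) * (enc \<phi> + 1) * 2" using card_subs by (intro mult_le_mono) auto
  finally show ?thesis unfolding N0_def by (intro power_increasing) (auto simp: algebra_simps)
qed

lemma cut_step:
  assumes tr: "timed_ht_trace H T tau lam" and k: "k < lam" and big: "2 * N0 (enc \<phi>) + 2 < lam"
  shows "\<exists>H' T' tau' lam' k'. timed_ht_trace H' T' tau' lam' \<and> lam' < lam \<and> k' < lam' \<and>
     (k = 0 \<longrightarrow> k' = 0) \<and> sat H' T' tau' lam' k' \<phi> = sat H T tau lam k \<phi>"
proof -
  let ?U = "subs \<phi> \<times> {..enc \<phi>} \<times> {..<2::nat}"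
  let ?f = "tyset \<phi> H T tau lam"
  have fU: "finite ?U" using finite_subs by simp
  have sub: "\<forall>p\<in>P. ?f p \<subseteq> ?U" for P unfolding tyset_def by auto
  have cU: "2 ^ card ?U \<le> N0 (enc \<phi>)" by (rule tyset_card)
  obtain i j where ij: "i < j" "j < lam" "?f i = ?f j"
    and kk: "(k \<le> i) \<or> (j \<le> k \<and> k \<noteq> 0)"
  proof (cases "N0 (enc \<phi>) \<le> k")
    case True
    have "2 ^ card ?U < card {0..k}" using cU True by simp
    then obtain i j where "i \<in> {0..k}" "j \<in> {0..k}" "i < j" "?f i = ?f j"
      using pigeon[OF fU sub] by blast
    moreover have "k \<noteq> 0" using True unfolding N0_def by (metis not_less0 one_le_numeral one_le_power le_less_trans less_le_trans zero_less_one le_zero_eq not_one_le_zero)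
    ultimately show ?thesis using that k by auto
  next
    case False
    have "2 ^ card ?U < card {k..<lam}" using cU False big by simp
    then obtain i j where "i \<in> {k..<lam}" "j \<in> {k..<lam}" "i < j" "?f i = ?f j"
      using pigeon[OF fU sub] by blast
    then show ?thesis using that by auto
  qed
  have mono: "\<And>a b. a \<le> b \<Longrightarrow> b < lam \<Longrightarrow> tau a \<le> tau b" using trace_mono[OF tr] by blast
  interpret C: cut_loc lam i j tau using ij mono by unfold_locales auto
  have ty: "sat (HX X H T) T tau lam i (shiftf d \<psi>) = sat (HX X H T) T tau lam j (shiftf d \<psi>)"
    if "\<psi> \<in> subs \<phi>" "X < 2" for \<psi> d X
  proof -
    have "(\<psi>, min d (enc \<phi>), X) \<in> ?f i \<longleftrightarrow> (\<psi>, min d (enc \<phi>), X) \<in> ?f j" using ij by simp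
    then have "sat (HX X H T) T tau lam i (shiftf (min d (enc \<phi>)) \<psi>) = sat (HX X H T) T tau lam j (shiftf (min d (enc \<phi>)) \<psi>)"
      using that unfolding tyset_def by auto
    then show ?thesis using sat_shiftf_clip[OF that(1)] by metis
  qed
  have cs: "sat (C.Hm H) (C.Hm T) C.tau' C.lam' q \<phi> = sat H T tau lam (C.mp q) \<phi>" if q: "q < C.lam'" for q
  proof -
    have "sat (HX 0 (C.Hm H) (C.Hm T)) (C.Hm T) C.tau' C.lam' q \<phi> = sat (HX 0 H T) T tau lam (C.mp q) \<phi>"
      by (rule C.cut_sat[OF ty subs_refl q]) simp_all
    then show ?thesis by simp
  qed
  have tr': "timed_ht_trace (C.Hm H) (C.Hm T) C.tau' C.lam'"
    unfolding timed_ht_trace_def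
  proof (intro conjI allI impI)
    fix q assume "q < C.lam'" then show "C.Hm H q \<subseteq> C.Hm T q"
      using C.mp_lt tr unfolding timed_ht_trace_def C.Hm_def by auto
  next
    show "C.tau' 0 = 0" using tr unfolding timed_ht_trace_def C.tau'_def by simp
  next
    fix q assume "Suc q < C.lam'" then show "C.tau' q \<le> C.tau' (Suc q)" by (intro C.tau'_mono) auto
  qed
  have ll: "C.lam' < lam" using C.dl_pos ij unfolding C.lam'_def by simp
  show ?thesis
  proof (cases "k \<le> i")
    case True
    have "k < C.lam'" using True C.i_lt by simp
    moreover have "C.mp k = k" using True by (simp add: C.mp_def)
    ultimately have "sat (C.Hm H) (C.Hm T) C.tau' C.lam' k \<phi> = sat H T tau lam k \<phi>" using cs[of k] by simp
    then show ?thesis using tr' ll \<open>k < C.lam'\<close> by (intro exI[of _ "C.Hm H"] exI[of _ "C.Hm T"] exI[of _ C.tau'] exI[of _ C.lam'] exI[of _ k] conjI) auto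
  next
    case False
    then have jk: "j \<le> k" "k \<noteq> 0" using kk by auto
    show ?thesis
    proof (cases "k = j")
      case True
      have "sat H T tau lam i \<phi> = sat H T tau lam j \<phi>" using ty[OF subs_refl, of 0 0] by simp
      moreover have "C.mp i = i" by (simp add: C.mp_def)
      ultimately have "sat (C.Hm H) (C.Hm T) C.tau' C.lam' i \<phi> = sat H T tau lam k \<phi>" using cs[of i] C.i_lt True by simp
      then show ?thesis using tr' ll C.i_lt jk by (intro exI[of _ "C.Hm H"] exI[of _ "C.Hm T"] exI[of _ C.tau'] exI[of _ C.lam'] exI[of _ i] conjI) auto
    next
      case nj: False
      have "k - C.dl < C.lam'" "i < k - C.dl" using k jk nj C.i_dl unfolding C.lam'_def by auto
      moreover have "C.mp (k - C.dl) = k" using \<open>i < k - C.dl\<close> jk C.i_dl by (simp add: C.mp_def)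
      ultimately have "sat (C.Hm H) (C.Hm T) C.tau' C.lam' (k - C.dl) \<phi> = sat H T tau lam k \<phi>" using cs[of "k - C.dl"] by simp
      then show ?thesis using tr' ll jk \<open>k - C.dl < C.lam'\<close> by (intro exI[of _ "C.Hm H"] exI[of _ "C.Hm T"] exI[of _ C.tau'] exI[of _ C.lam'] exI[of _ "k - C.dl"] conjI) auto
    qed
  qed
qed

lemma bounded_len:
  "timed_ht_trace H T tau lam \<Longrightarrow> k < lam \<Longrightarrow> \<exists>H' T' tau' lam' k'. timed_ht_trace H' T' tau' lam' \<and>
     lam' \<le> 2 * N0 (enc \<phi>) + 2 \<and> k' < lam' \<and> (k = 0 \<longrightarrow> k' = 0) \<and> sat H' T' tau' lam' k' \<phi> = sat H T tau lam k \<phi>"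
proof (induction lam arbitrary: H T tau k rule: less_induct)
  case (less lam)
  show ?case
  proof (cases "2 * N0 (enc \<phi>) + 2 < lam")
    case True
    obtain H' T' tau' lam' k' where c: "timed_ht_trace H' T' tau' lam'" "lam' < lam" "k' < lam'"
      "k = 0 \<longrightarrow> k' = 0" "sat H' T' tau' lam' k' \<phi> = sat H T tau lam k \<phi>"
      using cut_step[OF less.prems True] by blast
    show ?thesis using less.IH[OF c(2) c(1) c(3)] c(4,5) by metis
  next
    case False
    then show ?thesis using less.prems by (intro exI[of _ H] exI[of _ T] exI[of _ tau] exI[of _ lam] exI[of _ k]) auto
  qed
qed


primrec clampt :: "(nat \<Rightarrow> nat) \<Rightarrow> nat \<Rightarrow> nat \<Rightarrow> nat" where
  "clampt tau c 0 = 0"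
| "clampt tau c (Suc p) = clampt tau c p + min (tau (Suc p) - tau p) c"

lemma clampt_mono: "a \<le> b \<Longrightarrow> clampt tau c a \<le> clampt tau c b"
proof (induction b)
  case (Suc b) then show ?case by (cases "a = Suc b") auto
qed simp

lemma clampt_le: "clampt tau c p \<le> p * c"
  by (induction p) auto

lemma clamp_diff:
  assumes mono: "\<And>a b. a \<le> b \<Longrightarrow> b < lam \<Longrightarrow> tau a \<le> tau b"
  shows "k \<le> j \<Longrightarrow> j < lam \<Longrightarrow> clampt tau c j - clampt tau c k = tau j - tau k \<or>
      (c \<le> clampt tau c j - clampt tau c k \<and> c \<le> tau j - tau k)"
proof (induction j)
  case 0 then show ?case by simp
next
  case (Suc j)
  show ?case
  proof (cases "k = Suc j")
    case False
    then have kj: "k \<le> j" using Suc.prems by simp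
    have IH: "clampt tau c j - clampt tau c k = tau j - tau k \<or>
      (c \<le> clampt tau c j - clampt tau c k \<and> c \<le> tau j - tau k)" using Suc kj by simp
    have m1: "clampt tau c k \<le> clampt tau c j" using kj by (rule clampt_mono)
    have m2: "tau k \<le> tau j" "tau j \<le> tau (Suc j)" using kj Suc.prems mono by auto
    have e1: "clampt tau c (Suc j) - clampt tau c k = (clampt tau c j - clampt tau c k) + min (tau (Suc j) - tau j) c"
      using m1 by simp
    have e2: "tau (Suc j) - tau k = (tau j - tau k) + (tau (Suc j) - tau j)" using m2 by simp
    show ?thesis unfolding e1 e2 using IH by (auto simp: min_def)
  qed simp
qed

lemma in_int_clamp: "bndI c I \<Longrightarrow> D = D' \<or> (c \<le> D \<and> c \<le> D') \<Longrightarrow> in_int I D = in_int I D'"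
  by (cases "snd I") (auto simp: bndI_def in_int_def)

lemma sat_clamp:
  assumes mono: "\<And>a b. a \<le> b \<Longrightarrow> b < lam \<Longrightarrow> tau a \<le> tau b"
  shows "\<psi> \<in> subs \<phi> \<Longrightarrow> k < lam \<Longrightarrow> X < 2 \<Longrightarrow>
    sat (HX X H T) T (clampt tau (enc \<phi>) ) lam k \<psi> = sat (HX X H T) T tau lam k \<psi>"
proof (induction \<psi> arbitrary: k X)
  let ?c = "enc \<phi>"
  let ?t = "clampt tau ?c"
  have iI: "in_int I (?t b - ?t a) = in_int I (tau b - tau a)" if "enc_int I \<le> enc \<psi>" "\<psi> \<in> subs \<phi>"
     "a \<le> b" "b < lam" for I \<psi> a b
  proof -
    have "bndI ?c I" using bndI_mono[OF enc_int_bnd[of I]] that enc_subs[OF that(2)] by simp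
    then show ?thesis by (rule in_int_clamp[OF _ clamp_diff[OF mono that(3,4)]])
  qed
  {
    case (Atom x) then show ?case by simp
  next
    case Bot then show ?case by simp
  next
    case (And a b)
    have s: "a \<in> subs \<phi>" "b \<in> subs \<phi>" using subs_trans[OF And.prems(1)] subs_refl by auto
    show ?case using And.IH(1)[OF s(1) And.prems(2,3)] And.IH(2)[OF s(2) And.prems(2,3)] by simp
  next
    case (Or a b)
    have s: "a \<in> subs \<phi>" "b \<in> subs \<phi>" using subs_trans[OF Or.prems(1)] subs_refl by auto
    show ?case using Or.IH(1)[OF s(1) Or.prems(2,3)] Or.IH(2)[OF s(2) Or.prems(2,3)] by simp
  next
    case (Impl a b)
    have s: "a \<in> subs \<phi>" "b \<in> subs \<phi>" using subs_trans[OF Impl.prems(1)] subs_refl by auto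
    show ?case using Impl.IH(1)[OF s(1) Impl.prems(2), of X] Impl.IH(2)[OF s(2) Impl.prems(2), of X]
       Impl.IH(1)[OF s(1) Impl.prems(2), of 1] Impl.IH(2)[OF s(2) Impl.prems(2), of 1] Impl.prems(3)
      by simp
  next
    case (Prev I a)
    have s: "a \<in> subs \<phi>" using subs_trans[OF Prev.prems(1)] subs_refl by auto
    have "in_int I (?t k - ?t (k - 1)) = in_int I (tau k - tau (k - 1))"
      using iI[of I "Prev I a" "k - 1" k] Prev.prems enc_int_le by simp
    then show ?case using Prev.IH[OF s, of "k - 1" X] Prev.prems by simp
  next
    case (Next I a)
    have s: "a \<in> subs \<phi>" using subs_trans[OF Next.prems(1)] subs_refl by auto
    have "k + 1 < lam \<Longrightarrow> in_int I (?t (k + 1) - ?t k) = in_int I (tau (k + 1) - tau k)"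
      using iI[of I "Next I a" k "k + 1"] Next.prems enc_int_le by simp
    then show ?case using Next.IH[OF s, of "k + 1" X] Next.prems by auto
  next
    case (Since I a b)
    have s: "a \<in> subs \<phi>" "b \<in> subs \<phi>" using subs_trans[OF Since.prems(1)] subs_refl by auto
    have ia: "\<And>i. i \<le> k \<Longrightarrow> sat (HX X H T) T ?t lam i a = sat (HX X H T) T tau lam i a"
      using Since.IH(1)[OF s(1)] Since.prems by auto
    have ib: "\<And>i. i \<le> k \<Longrightarrow> sat (HX X H T) T ?t lam i b = sat (HX X H T) T tau lam i b"
      using Since.IH(2)[OF s(2)] Since.prems by auto
    have t: "\<And>i. i \<le> k \<Longrightarrow> in_int I (?t k - ?t i) = in_int I (tau k - tau i)"
      using iI[of I "Since I a b"] Since.prems enc_int_le by auto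
    show ?case using ia ib t by (simp cong: conj_cong imp_cong)
  next
    case (Trigger I a b)
    have s: "a \<in> subs \<phi>" "b \<in> subs \<phi>" using subs_trans[OF Trigger.prems(1)] subs_refl by auto
    have ia: "\<And>i. i \<le> k \<Longrightarrow> sat (HX X H T) T ?t lam i a = sat (HX X H T) T tau lam i a"
      using Trigger.IH(1)[OF s(1)] Trigger.prems by auto
    have ib: "\<And>i. i \<le> k \<Longrightarrow> sat (HX X H T) T ?t lam i b = sat (HX X H T) T tau lam i b"
      using Trigger.IH(2)[OF s(2)] Trigger.prems by auto
    have t: "\<And>i. i \<le> k \<Longrightarrow> in_int I (?t k - ?t i) = in_int I (tau k - tau i)"
      using iI[of I "Trigger I a b"] Trigger.prems enc_int_le by auto
    show ?case using ia ib t by (simp cong: conj_cong imp_cong)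
  next
    case (Until I a b)
    have s: "a \<in> subs \<phi>" "b \<in> subs \<phi>" using subs_trans[OF Until.prems(1)] subs_refl by auto
    have ia: "\<And>i. i < lam \<Longrightarrow> sat (HX X H T) T ?t lam i a = sat (HX X H T) T tau lam i a"
      using Until.IH(1)[OF s(1)] Until.prems by auto
    have ib: "\<And>i. i < lam \<Longrightarrow> sat (HX X H T) T ?t lam i b = sat (HX X H T) T tau lam i b"
      using Until.IH(2)[OF s(2)] Until.prems by auto
    have t: "\<And>i. k \<le> i \<Longrightarrow> i < lam \<Longrightarrow> in_int I (?t i - ?t k) = in_int I (tau i - tau k)"
      using iI[of I "Until I a b"] Until.prems enc_int_le by auto
    show ?case using ia ib t by (simp cong: conj_cong imp_cong)
  next
    case (Release I a b)
    have s: "a \<in> subs \<phi>" "b \<in> subs \<phi>" using subs_trans[OF Release.prems(1)] subs_refl by auto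
    have ia: "\<And>i. i < lam \<Longrightarrow> sat (HX X H T) T ?t lam i a = sat (HX X H T) T tau lam i a"
      using Release.IH(1)[OF s(1)] Release.prems by auto
    have ib: "\<And>i. i < lam \<Longrightarrow> sat (HX X H T) T ?t lam i b = sat (HX X H T) T tau lam i b"
      using Release.IH(2)[OF s(2)] Release.prems by auto
    have t: "\<And>i. k \<le> i \<Longrightarrow> i < lam \<Longrightarrow> in_int I (?t i - ?t k) = in_int I (tau i - tau k)"
      using iI[of I "Release I a b"] Release.prems enc_int_le by auto
    show ?case using ia ib t by (simp cong: conj_cong imp_cong)
  }
qed

definition rs :: "nat \<Rightarrow> (nat \<Rightarrow> nat set) \<Rightarrow> nat \<Rightarrow> nat set" where "rs c H = (\<lambda>p. H p \<inter> {..c})"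

lemma sat_restrict:
  "\<psi> \<in> subs \<phi> \<Longrightarrow> X < 2 \<Longrightarrow>
    sat (HX X (rs (enc \<phi>) H) (rs (enc \<phi>) T)) (rs (enc \<phi>) T) tau lam k \<psi> = sat (HX X H T) T tau lam k \<psi>"
proof (induction \<psi> arbitrary: k X)
  case (Atom a)
  have "a \<le> enc (Atom a)" by (simp add: le_prod_encode_2)
  then have "a \<le> enc \<phi>" using enc_subs[OF Atom.prems(1)] by simp
  then show ?case by (auto simp: rs_def HX_def)
next
  case (Impl a b)
  have s: "a \<in> subs \<phi>" "b \<in> subs \<phi>" using subs_trans[OF Impl.prems(1)] subs_refl by auto
  show ?case using Impl.IH(1)[OF s(1), of X] Impl.IH(2)[OF s(2), of X]
     Impl.IH(1)[OF s(1), of 1] Impl.IH(2)[OF s(2), of 1] Impl.prems(2)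
    by simp
next
  case Bot then show ?case by simp
next
  case (And a b)
  have s: "a \<in> subs \<phi>" "b \<in> subs \<phi>" using subs_trans[OF And.prems(1)] subs_refl by auto
  show ?case using And.IH(1)[OF s(1) And.prems(2)] And.IH(2)[OF s(2) And.prems(2)] by simp
next
  case (Or a b)
  have s: "a \<in> subs \<phi>" "b \<in> subs \<phi>" using subs_trans[OF Or.prems(1)] subs_refl by auto
  show ?case using Or.IH(1)[OF s(1) Or.prems(2)] Or.IH(2)[OF s(2) Or.prems(2)] by simp
next
  case (Since I a b)
  have s: "a \<in> subs \<phi>" "b \<in> subs \<phi>" using subs_trans[OF Since.prems(1)] subs_refl by auto
  show ?case using Since.IH(1)[OF s(1) Since.prems(2)] Since.IH(2)[OF s(2) Since.prems(2)] by simp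
next
  case (Trigger I a b)
  have s: "a \<in> subs \<phi>" "b \<in> subs \<phi>" using subs_trans[OF Trigger.prems(1)] subs_refl by auto
  show ?case using Trigger.IH(1)[OF s(1) Trigger.prems(2)] Trigger.IH(2)[OF s(2) Trigger.prems(2)] by simp
next
  case (Until I a b)
  have s: "a \<in> subs \<phi>" "b \<in> subs \<phi>" using subs_trans[OF Until.prems(1)] subs_refl by auto
  show ?case using Until.IH(1)[OF s(1) Until.prems(2)] Until.IH(2)[OF s(2) Until.prems(2)] by simp
next
  case (Release I a b)
  have s: "a \<in> subs \<phi>" "b \<in> subs \<phi>" using subs_trans[OF Release.prems(1)] subs_refl by auto
  show ?case using Release.IH(1)[OF s(1) Release.prems(2)] Release.IH(2)[OF s(2) Release.prems(2)] by simp
next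
  case (Prev I a)
  have s: "a \<in> subs \<phi>" using subs_trans[OF Prev.prems(1)] subs_refl by auto
  show ?case using Prev.IH[OF s Prev.prems(2)] by simp
next
  case (Next I a)
  have s: "a \<in> subs \<phi>" using subs_trans[OF Next.prems(1)] subs_refl by auto
  show ?case using Next.IH[OF s Next.prems(2)] by simp
qed


lemma enc_le:
  "enc a \<le> enc (And a b)" "enc b \<le> enc (And a b)"
  "enc a \<le> enc (Or a b)" "enc b \<le> enc (Or a b)"
  "enc a \<le> enc (Impl a b)" "enc b \<le> enc (Impl a b)"
  "enc a \<le> enc (Prev I a)" "enc a \<le> enc (Next I a)"
  "enc a \<le> enc (Since I a b)" "enc b \<le> enc (Since I a b)"
  "enc a \<le> enc (Trigger I a b)" "enc b \<le> enc (Trigger I a b)"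
  "enc a \<le> enc (Until I a b)" "enc b \<le> enc (Until I a b)"
  "enc a \<le> enc (Release I a b)" "enc b \<le> enc (Release I a b)"
  "p \<le> enc (Atom p)"
  by (simp_all, (meson le_prod_encode_1 le_prod_encode_2 order.trans)+)

lemma inI_enc:
  "(fst (prod_decode (enc_int I)) \<le> d \<and> (snd (prod_decode (enc_int I)) = 0 \<or> d + 1 < snd (prod_decode (enc_int I))))
   = in_int I d"
  by (cases I; rename_tac m n; case_tac n) (auto simp: enc_int_def in_int_def)

lemma in_int_alt: "in_int I d =
  (fst (prod_decode (enc_int I)) \<le> d \<and> (snd (prod_decode (enc_int I)) = 0 \<or> Suc d < snd (prod_decode (enc_int I))))"
  using inI_enc[of I d] by simp



lemma uniq:
  assumes C: "\<forall>z\<le>x. \<forall>p<lam. \<forall>X<2. LL z p X = stepN LL AT tau lam z p X"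
    and A: "\<forall>X<2. \<forall>p a. a \<le> x \<longrightarrow> AT X p a = (a \<in> HX X H T p)"
  shows "enc \<psi> \<le> x \<Longrightarrow> p < lam \<Longrightarrow> X < 2 \<Longrightarrow> LL (enc \<psi>) p X = sat (HX X H T) T tau lam p \<psi>"
proof (induction \<psi> arbitrary: p X)
  case (Atom a)
  have s: "LL (enc (Atom a)) p X = stepN LL AT tau lam (enc (Atom a)) p X" using Atom.prems C by blast
  show ?case using s Atom.prems A enc_le(17) by (simp add: stepN_def stepD_def) (meson order.trans)
next
  case (Bot)
  have s: "LL (enc (Bot)) p X = stepN LL AT tau lam (enc (Bot)) p X" using Bot.prems C by blast
  show ?case using s Bot.prems A enc_le(17) by (simp add: stepN_def stepD_def)
next
  case (And a b)
  have s: "LL (enc (And a b)) p X = stepN LL AT tau lam (enc (And a b)) p X" using And.prems C by blast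
  have ia: "\<And>X. X < 2 \<Longrightarrow> LL (enc a) p X = sat (HX X H T) T tau lam p a"
    using And.IH(1) And.prems enc_le by (meson order.trans)
  have ib: "\<And>X. X < 2 \<Longrightarrow> LL (enc b) p X = sat (HX X H T) T tau lam p b"
    using And.IH(2) And.prems enc_le by (meson order.trans)
  show ?case using s And.prems ia[of X] ib[of X] ia[of 1] ib[of 1] by (simp add: stepN_def stepD_def)
next
  case (Or a b)
  have s: "LL (enc (Or a b)) p X = stepN LL AT tau lam (enc (Or a b)) p X" using Or.prems C by blast
  have ia: "\<And>X. X < 2 \<Longrightarrow> LL (enc a) p X = sat (HX X H T) T tau lam p a"
    using Or.IH(1) Or.prems enc_le by (meson order.trans)
  have ib: "\<And>X. X < 2 \<Longrightarrow> LL (enc b) p X = sat (HX X H T) T tau lam p b"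
    using Or.IH(2) Or.prems enc_le by (meson order.trans)
  show ?case using s Or.prems ia[of X] ib[of X] ia[of 1] ib[of 1] by (simp add: stepN_def stepD_def)
next
  case (Impl a b)
  have s: "LL (enc (Impl a b)) p X = stepN LL AT tau lam (enc (Impl a b)) p X" using Impl.prems C by blast
  have ia: "\<And>X. X < 2 \<Longrightarrow> LL (enc a) p X = sat (HX X H T) T tau lam p a"
    using Impl.IH(1) Impl.prems enc_le by (meson order.trans)
  have ib: "\<And>X. X < 2 \<Longrightarrow> LL (enc b) p X = sat (HX X H T) T tau lam p b"
    using Impl.IH(2) Impl.prems enc_le by (meson order.trans)
  show ?case using s Impl.prems ia[of X] ib[of X] ia[of 1] ib[of 1] by (simp add: stepN_def stepD_def)
next
  case (Prev I a)
  have s: "LL (enc (Prev I a)) p X = stepN LL AT tau lam (enc (Prev I a)) p X" using Prev.prems C by blast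
  have ia: "\<forall>i<lam. LL (enc a) i X = sat (HX X H T) T tau lam i a"
    using Prev.IH Prev.prems enc_le by (meson order.trans)
  show ?case using s Prev.prems ia by (simp add: stepN_def stepD_def in_int_alt)
next
  case (Next I a)
  have s: "LL (enc (Next I a)) p X = stepN LL AT tau lam (enc (Next I a)) p X" using Next.prems C by blast
  have ia: "\<forall>i<lam. LL (enc a) i X = sat (HX X H T) T tau lam i a"
    using Next.IH Next.prems enc_le by (meson order.trans)
  show ?case using s Next.prems ia by (auto simp add: stepN_def stepD_def in_int_alt)
next
  case (Since I a b)
  have s: "LL (enc (Since I a b)) p X = stepN LL AT tau lam (enc (Since I a b)) p X" using Since.prems C by blast
  have ia: "\<forall>i\<le>p. LL (enc a) i X = sat (HX X H T) T tau lam i a"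
    using Since.IH(1) Since.prems enc_le by (meson order.trans order.strict_trans1)
  have ib: "\<forall>i\<le>p. LL (enc b) i X = sat (HX X H T) T tau lam i b"
    using Since.IH(2) Since.prems enc_le by (meson order.trans order.strict_trans1)
  show ?case using s Since.prems ia ib by (simp add: stepN_def stepD_def in_int_alt less_Suc_eq_le) blast
next
  case (Trigger I a b)
  have s: "LL (enc (Trigger I a b)) p X = stepN LL AT tau lam (enc (Trigger I a b)) p X" using Trigger.prems C by blast
  have ia: "\<forall>i\<le>p. LL (enc a) i X = sat (HX X H T) T tau lam i a"
    using Trigger.IH(1) Trigger.prems enc_le by (meson order.trans order.strict_trans1)
  have ib: "\<forall>i\<le>p. LL (enc b) i X = sat (HX X H T) T tau lam i b"
    using Trigger.IH(2) Trigger.prems enc_le by (meson order.trans order.strict_trans1)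
  show ?case using s Trigger.prems ia ib by (simp add: stepN_def stepD_def in_int_alt less_Suc_eq_le) blast
next
  case (Until I a b)
  have s: "LL (enc (Until I a b)) p X = stepN LL AT tau lam (enc (Until I a b)) p X" using Until.prems C by blast
  have ia: "\<forall>i<lam. LL (enc a) i X = sat (HX X H T) T tau lam i a"
    using Until.IH(1) Until.prems enc_le by (meson order.trans)
  have ib: "\<forall>i<lam. LL (enc b) i X = sat (HX X H T) T tau lam i b"
    using Until.IH(2) Until.prems enc_le by (meson order.trans)
  have eq1: "(\<forall>i<j. p \<le> i \<longrightarrow> LL (enc a) i X) = (\<forall>i. p \<le> i \<and> i < j \<longrightarrow> sat (HX X H T) T tau lam i a)"
    "(\<exists>i<j. p \<le> i \<and> LL (enc a) i X) = (\<exists>i. p \<le> i \<and> i < j \<and> sat (HX X H T) T tau lam i a)"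
    if "j < lam" for j using ia that by auto
  show ?case using s Until.prems ib eq1 by (auto simp add: stepN_def stepD_def in_int_alt)
next
  case (Release I a b)
  have s: "LL (enc (Release I a b)) p X = stepN LL AT tau lam (enc (Release I a b)) p X" using Release.prems C by blast
  have ia: "\<forall>i<lam. LL (enc a) i X = sat (HX X H T) T tau lam i a"
    using Release.IH(1) Release.prems enc_le by (meson order.trans)
  have ib: "\<forall>i<lam. LL (enc b) i X = sat (HX X H T) T tau lam i b"
    using Release.IH(2) Release.prems enc_le by (meson order.trans)
  have eq1: "(\<forall>i<j. p \<le> i \<longrightarrow> LL (enc a) i X) = (\<forall>i. p \<le> i \<and> i < j \<longrightarrow> sat (HX X H T) T tau lam i a)"
    "(\<exists>i<j. p \<le> i \<and> LL (enc a) i X) = (\<exists>i. p \<le> i \<and> i < j \<and> sat (HX X H T) T tau lam i a)"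
    if "j < lam" for j using ia that by auto
  show ?case using s Release.prems ib eq1 by (auto simp add: stepN_def stepD_def in_int_alt)
qed


definition codeb :: "nat \<Rightarrow> nat \<Rightarrow> (nat \<Rightarrow> nat) \<Rightarrow> nat" where
  "codeb b n f = (\<Sum>j<n. f j * b ^ j)"

lemma codeb_less: "(\<forall>j<n. f j < b) \<Longrightarrow> codeb b n f < b ^ n"
proof (induction n)
  case 0 then show ?case by (simp add: codeb_def)
next
  case (Suc n)
  have "codeb b (Suc n) f = codeb b n f + f n * b ^ n" by (simp add: codeb_def)
  also have "\<dots> < b ^ n + f n * b ^ n" using Suc by simp
  also have "\<dots> = (f n + 1) * b ^ n" by simp
  also have "\<dots> \<le> b * b ^ n"
  proof (intro mult_le_mono1)
    have "f n < b" using Suc.prems by simp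
    then show "f n + 1 \<le> b" by simp
  qed
  finally show ?case by simp
qed

lemma dig_codeb: assumes "\<forall>j<n. f j < b" "i < n" shows "dig b (codeb b n f) i = f i"
  using assms
proof (induction n)
  case 0 then show ?case by simp
next
  case (Suc n)
  have b0: "b > 0" using Suc.prems by (metis gr_zeroI not_less0)
  show ?case
  proof (cases "i = n")
    case True
    have lt: "codeb b n f < b ^ n" using Suc.prems by (intro codeb_less) auto
    have "codeb b (Suc n) f = codeb b n f + f n * b ^ n" by (simp add: codeb_def)
    then have "codeb b (Suc n) f div b ^ n = f n"
      using lt b0 by (simp add: div_add1_eq[of "codeb b n f"] )
    then show ?thesis using True Suc.prems unfolding dig_def by simp
  next
    case False
    then have i: "i < n" using Suc.prems by simp
    have "n = Suc (n - Suc i + i)" using i by simp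
    then have pw: "b ^ n = b * b ^ (n - Suc i) * b ^ i"
      by (metis power_Suc power_add mult.assoc)
    have "f n * b ^ n = (b * (f n * b ^ (n - Suc i))) * b ^ i"
      unfolding pw by (simp only: mult_ac)
    then have "codeb b (Suc n) f = codeb b n f + (b * (f n * b ^ (n - Suc i))) * b ^ i"
      by (simp add: codeb_def)
    then have "codeb b (Suc n) f div b ^ i = codeb b n f div b ^ i + b * (f n * b ^ (n - Suc i))"
      using b0 by simp
    then have "dig b (codeb b (Suc n) f) i = dig b (codeb b n f) i" unfolding dig_def by simp
    then show ?thesis using Suc i by simp
  qed
qed

lemma dig2_less: "dig 2 c i < 2" by (simp add: dig_def)

lemma stepN_cong:
  assumes E: "\<And>z' p' X'. z' < z \<Longrightarrow> p' < lam \<Longrightarrow> X' < 2 \<Longrightarrow> LL z' p' X' = LL' z' p' X'"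
    and p: "p < lam" and X: "X < 2"
  shows "stepN LL AT tau lam z p X = stepN LL' AT tau lam z p X"
proof -
  obtain tg r where z: "prod_decode z = (tg, r)" by fastforce
  obtain u v where r: "prod_decode r = (u, v)" by fastforce
  obtain m nc where u: "prod_decode u = (m, nc)" by fastforce
  obtain a2 b2 where v: "prod_decode v = (a2, b2)" by fastforce
  have ze: "z = prod_encode (tg, r)" using z by (metis prod_decode_inverse)
  have re: "r = prod_encode (u, v)" using r by (metis prod_decode_inverse)
  have ve: "v = prod_encode (a2, b2)" using v by (metis prod_decode_inverse)
  have tri: "n \<le> triangle n" for n by (induction n) auto
  show ?thesis
  proof (cases "tg = 0")
    case True then show ?thesis by (simp add: stepN_def stepD_def z)
  next
    case False
    have "r < z" unfolding ze prod_encode_def using False tri[of "tg + r"] by simp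
    moreover have "u \<le> r" "v \<le> r" unfolding re by (rule le_prod_encode_1, rule le_prod_encode_2)
    moreover have "a2 \<le> v" "b2 \<le> v" unfolding ve by (rule le_prod_encode_1, rule le_prod_encode_2)
    ultimately have lt: "u < z" "v < z" "a2 < z" "b2 < z" by linarith+
    have E2: "\<And>p'. p' < lam \<Longrightarrow> X' < 2 \<Longrightarrow> LL y p' X' = LL' y p' X'" if "y \<in> {u, v, a2, b2}" for y X'
      using E lt that by auto
    show ?thesis unfolding stepN_def stepD_def z r u v Let_def fst_conv snd_conv
      using p X E2 by (auto simp: less_Suc_eq_le)
  qed
qed


lemma sat_cong:
  assumes e: "\<forall>p<lam. H p = H' p \<and> T p = T' p \<and> tau p = tau' p"
  shows "k < lam \<Longrightarrow> X < 2 \<Longrightarrow> sat (HX X H T) T tau lam k \<psi> = sat (HX X H' T') T' tau' lam k \<psi>"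
proof (induction \<psi> arbitrary: k X)
  case (Atom x)
  then show ?case using e by (auto simp: HX_def)
next
  case (Impl a b)
  then show ?case using Impl.IH[of k X] Impl.IH[of k 1] by simp
next
  case (Prev I a)
  then show ?case using Prev.IH[of "k - 1" X] e by auto
next
  case (Next I a)
  then show ?case using Next.IH[of "k + 1" X] e by auto
next
  case (Since I a b)
  have ia: "\<And>i. i \<le> k \<Longrightarrow> sat (HX X H T) T tau lam i a = sat (HX X H' T') T' tau' lam i a"
    using Since by auto
  have ib: "\<And>i. i \<le> k \<Longrightarrow> sat (HX X H T) T tau lam i b = sat (HX X H' T') T' tau' lam i b"
    using Since by auto
  have t: "\<And>i. i \<le> k \<Longrightarrow> tau i = tau' i" using e Since.prems by auto
  show ?case using ia ib t by (simp cong: conj_cong imp_cong)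
next
  case (Trigger I a b)
  have ia: "\<And>i. i \<le> k \<Longrightarrow> sat (HX X H T) T tau lam i a = sat (HX X H' T') T' tau' lam i a"
    using Trigger by auto
  have ib: "\<And>i. i \<le> k \<Longrightarrow> sat (HX X H T) T tau lam i b = sat (HX X H' T') T' tau' lam i b"
    using Trigger by auto
  have t: "\<And>i. i \<le> k \<Longrightarrow> tau i = tau' i" using e Trigger.prems by auto
  show ?case using ia ib t by (simp cong: conj_cong imp_cong)
next
  case (Until I a b)
  have ia: "\<And>i. i < lam \<Longrightarrow> sat (HX X H T) T tau lam i a = sat (HX X H' T') T' tau' lam i a"
    using Until by auto
  have ib: "\<And>i. i < lam \<Longrightarrow> sat (HX X H T) T tau lam i b = sat (HX X H' T') T' tau' lam i b"
    using Until by auto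
  have t: "\<And>i. i < lam \<Longrightarrow> tau i = tau' i" using e by auto
  show ?case using ia ib t Until.prems by (simp cong: conj_cong imp_cong)
next
  case (Release I a b)
  have ia: "\<And>i. i < lam \<Longrightarrow> sat (HX X H T) T tau lam i a = sat (HX X H' T') T' tau' lam i a"
    using Release by auto
  have ib: "\<And>i. i < lam \<Longrightarrow> sat (HX X H T) T tau lam i b = sat (HX X H' T') T' tau' lam i b"
    using Release by auto
  have t: "\<And>i. i < lam \<Longrightarrow> tau i = tau' i" using e by auto
  show ?case using ia ib t Release.prems by (simp cong: conj_cong imp_cong)
qed auto


definition LLfix :: "(nat \<Rightarrow> nat \<Rightarrow> nat \<Rightarrow> bool) \<Rightarrow> (nat \<Rightarrow> nat) \<Rightarrow> nat \<Rightarrow> nat \<Rightarrow> nat \<Rightarrow> nat \<Rightarrow> bool" where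
  "LLfix AT tau lam = wfrec (measure id) (\<lambda>f z p X. p < lam \<and> X < 2 \<and> stepN f AT tau lam z p X)"

lemma LLfix_eq:
  assumes "p < lam" "X < 2"
  shows "LLfix AT tau lam z p X = stepN (LLfix AT tau lam) AT tau lam z p X"
proof -
  let ?F = "\<lambda>f z p X. p < lam \<and> X < 2 \<and> stepN f AT tau lam z p X"
  have "LLfix AT tau lam z = ?F (cut (LLfix AT tau lam) (measure id) z) z"
    unfolding LLfix_def by (rule wfrec) simp
  then have "LLfix AT tau lam z p X = stepN (cut (LLfix AT tau lam) (measure id) z) AT tau lam z p X"
    using assms by simp
  also have "\<dots> = stepN (LLfix AT tau lam) AT tau lam z p X"
    by (rule stepN_cong) (auto simp: cut_apply assms)
  finally show ?thesis .
qed

lemma good_sound: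
  assumes g: "goodH fin (enc \<phi>)"
    and f: "\<And>lam k Lc. fin lam k Lc \<Longrightarrow> R k \<and> Q (LLof lam Lc (enc \<phi>) k 0)"
  shows "\<exists>H T tau lam k. timed_ht_trace H T tau lam \<and> k < lam \<and> R k \<and> Q (sat H T tau lam k \<phi>)"
proof -
  let ?x = "enc \<phi>"
  obtain lam k hc tc ta Lc where k: "k < lam" and tr: "traceH ?x lam hc tc ta"
    and c: "constrH ?x lam hc tc ta Lc" and fi: "fin lam k Lc"
    using g unfolding goodH_def by blast
  define H where "H = (\<lambda>p. {a. a \<le> ?x \<and> ATof ?x hc tc 0 p a})"
  define T where "T = (\<lambda>p. {a. a \<le> ?x \<and> ATof ?x hc tc 1 p a})"
  define tau where "tau = TAUof ?x lam ta"
  have trace: "timed_ht_trace H T tau lam"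
    unfolding timed_ht_trace_def
  proof (intro conjI allI impI)
    fix i assume "i < lam"
    show "H i \<subseteq> T i"
    proof
      fix a assume "a \<in> H i"
      then have "a \<le> ?x" "dig 2 hc (i * (?x + 1) + a) = 1" unfolding H_def ATof_def by auto
      moreover have "dig 2 hc (i * (?x + 1) + a) \<le> dig 2 tc (i * (?x + 1) + a)"
        using tr \<open>i < lam\<close> \<open>a \<le> ?x\<close> unfolding traceH_def by auto
      moreover have "dig 2 tc (i * (?x + 1) + a) < 2" by (rule dig2_less)
      ultimately show "a \<in> T i" unfolding T_def ATof_def by auto
    qed
  next
    show "tau 0 = 0" using tr unfolding traceH_def tau_def by simp
  next
    fix i assume "Suc i < lam"
    then show "tau i \<le> tau (Suc i)" using tr unfolding traceH_def tau_def by auto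
  qed
  have A: "\<forall>X<2. \<forall>p a. a \<le> ?x \<longrightarrow> ATof ?x hc tc X p a = (a \<in> HX X H T p)"
    unfolding H_def T_def HX_def by (auto simp: less_2_cases_iff ATof_def)
  have C: "\<forall>z\<le>?x. \<forall>p<lam. \<forall>X<2. LLof lam Lc z p X = stepN (LLof lam Lc) (ATof ?x hc tc) tau lam z p X"
    using c unfolding constrH_def tau_def by (auto simp: less_Suc_eq_le)
  have "LLof lam Lc ?x k 0 = sat (HX 0 H T) T tau lam k \<phi>"
    by (rule uniq[OF C A]) (use k in auto)
  then have "LLof lam Lc ?x k 0 = sat H T tau lam k \<phi>" by simp
  then have "R k \<and> Q (sat H T tau lam k \<phi>)" using f[OF fi] by simp
  then show ?thesis using trace k by blast
qed

lemma good_complete: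
  assumes tr: "timed_ht_trace H T tau lam" and k: "k < lam" and L: "lam \<le> Lmax x"
    and bnd: "\<forall>p<lam. T p \<subseteq> {..x} \<and> tau p \<le> p * x"
    and fin: "\<And>Lc. LLof lam Lc x k 0 = sat H T tau lam k \<phi> \<Longrightarrow> fin lam k Lc"
    and x: "x = enc \<phi>"
  shows "goodH fin x"
proof -
  have HT: "\<forall>p<lam. H p \<subseteq> T p" using tr unfolding timed_ht_trace_def by auto
  define fh where "fh = (\<lambda>i. if i mod (x + 1) \<in> H (i div (x + 1)) then 1 else 0 :: nat)"
  define ft where "ft = (\<lambda>i. if i mod (x + 1) \<in> T (i div (x + 1)) then 1 else 0 :: nat)"
  define hc where "hc = codeb 2 (lam * (x + 1)) fh"
  define tc where "tc = codeb 2 (lam * (x + 1)) ft"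
  define ta where "ta = codeb (lam * (x + 1) + 1) lam tau"
  define AT where "AT = ATof x hc tc"
  define tau' where "tau' = TAUof x lam ta"
  define LLs where "LLs = LLfix AT tau' lam"
  define fl where "fl = (\<lambda>i. if LLs (i div 2 div lam) (i div 2 mod lam) (i mod 2) then 1 else 0 :: nat)"
  define Lc where "Lc = codeb 2 ((x + 1) * lam * 2) fl"
  have lam0: "0 < lam" using k by simp
  have idxA: "p * (x + 1) + a < lam * (x + 1)" "(p * (x + 1) + a) div (x + 1) = p"
    "(p * (x + 1) + a) mod (x + 1) = a" if "p < lam" "a \<le> x" for p a
  proof -
    have "p * (x + 1) + a < (p + 1) * (x + 1)" using that by simp
    also have "\<dots> \<le> lam * (x + 1)" using that by (intro mult_le_mono1) simp
    finally show "p * (x + 1) + a < lam * (x + 1)" .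
    have a: "a < x + 1" using that by simp
    have e: "p * (x + 1) + a = a + p * (x + 1)" by simp
    show "(p * (x + 1) + a) div (x + 1) = p" unfolding e
      by (subst div_mult_self1) (use a in simp_all)
    show "(p * (x + 1) + a) mod (x + 1) = a" unfolding e
      by (subst mod_mult_self1) (use a in simp_all)
  qed
  have dH: "dig 2 hc (p * (x + 1) + a) = (if a \<in> H p then 1 else 0)" if "p < lam" "a \<le> x" for p a
    unfolding hc_def using dig_codeb[of "lam * (x + 1)" fh 2 "p * (x + 1) + a"] idxA[OF that]
    by (simp add: fh_def)
  have dT: "dig 2 tc (p * (x + 1) + a) = (if a \<in> T p then 1 else 0)" if "p < lam" "a \<le> x" for p a
    unfolding tc_def using dig_codeb[of "lam * (x + 1)" ft 2 "p * (x + 1) + a"] idxA[OF that]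
    by (simp add: ft_def)
  have tlt: "tau p < lam * (x + 1) + 1" if "p < lam" for p
  proof -
    have "tau p \<le> p * x" using bnd that by auto
    also have "\<dots> \<le> lam * (x + 1)" using that by (intro mult_le_mono) auto
    finally show ?thesis by simp
  qed
  have dtau: "tau' p = tau p" if "p < lam" for p
    unfolding tau'_def TAUof_def ta_def using dig_codeb[of lam tau "lam * (x + 1) + 1" p] tlt that by auto
  have idxL: "(z * lam + p) * 2 + X < (x + 1) * lam * 2" "((z * lam + p) * 2 + X) mod 2 = X"
     "((z * lam + p) * 2 + X) div 2 div lam = z" "((z * lam + p) * 2 + X) div 2 mod lam = p"
    if "z \<le> x" "p < lam" "X < 2" for z p X
  proof -
    have "z * lam + p < (z + 1) * lam" using that by simp
    also have "\<dots> \<le> (x + 1) * lam" using that by (intro mult_le_mono1) simp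
    finally have "z * lam + p < (x + 1) * lam" .
    then have "Suc (z * lam + p) \<le> (x + 1) * lam" by simp
    then have "Suc (z * lam + p) * 2 \<le> (x + 1) * lam * 2" by (rule mult_le_mono1)
    then show "(z * lam + p) * 2 + X < (x + 1) * lam * 2" using that by simp
    have e1: "(z * lam + p) * 2 + X = X + (z * lam + p) * 2" by simp
    have e2: "z * lam + p = p + z * lam" by simp
    have d2: "((z * lam + p) * 2 + X) div 2 = z * lam + p" unfolding e1
      by (subst div_mult_self1) (use that in simp_all)
    show "((z * lam + p) * 2 + X) mod 2 = X" unfolding e1
      by (subst mod_mult_self1) (use that in simp_all)
    show "((z * lam + p) * 2 + X) div 2 div lam = z" unfolding d2
      by (subst e2, subst div_mult_self1) (use that in simp_all)
    show "((z * lam + p) * 2 + X) div 2 mod lam = p" unfolding d2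
      by (subst e2, subst mod_mult_self1) (use that in simp_all)
  qed
  have dL: "LLof lam Lc z p X = LLs z p X" if "z \<le> x" "p < lam" "X < 2" for z p X
    unfolding LLof_def Lc_def using dig_codeb[of "(x + 1) * lam * 2" fl 2 "(z * lam + p) * 2 + X"] idxL[OF that]
    by (simp add: fl_def)
  have hcb: "hc < 2 ^ (lam * (x + 1))" unfolding hc_def by (rule codeb_less) (simp add: fh_def)
  have tcb: "tc < 2 ^ (lam * (x + 1))" unfolding tc_def by (rule codeb_less) (simp add: ft_def)
  have tab: "ta < (lam * (x + 1) + 1) ^ lam" unfolding ta_def by (rule codeb_less) (use tlt in auto)
  have Lcb: "Lc < 2 ^ ((x + 1) * lam * 2)" unfolding Lc_def by (rule codeb_less) (simp add: fl_def)
  have trH: "traceH x lam hc tc ta"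
    unfolding traceH_def
  proof (intro conjI allI impI)
    show "TAUof x lam ta 0 = 0" using dtau[OF lam0] tr unfolding tau'_def timed_ht_trace_def by simp
  next
    fix p assume "p < lam" "p + 1 < lam"
    then show "TAUof x lam ta p \<le> TAUof x lam ta (p + 1)"
      using dtau[of p] dtau[of "p + 1"] tr unfolding tau'_def timed_ht_trace_def by auto
  next
    fix p a assume "p < lam" "a < x + 1"
    then show "dig 2 hc (p * (x + 1) + a) \<le> dig 2 tc (p * (x + 1) + a)"
      using dH[of p a] dT[of p a] HT by auto
  qed
  have C: "\<forall>z\<le>x. \<forall>p<lam. \<forall>X<2. LLof lam Lc z p X = stepN (LLof lam Lc) AT tau' lam z p X"
  proof (intro allI impI)
    fix z p X :: nat assume zpX: "z \<le> x" "p < lam" "X < 2"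
    have "LLof lam Lc z p X = LLs z p X" using dL zpX by simp
    also have "\<dots> = stepN LLs AT tau' lam z p X" unfolding LLs_def by (rule LLfix_eq[OF zpX(2,3)])
    also have "\<dots> = stepN (LLof lam Lc) AT tau' lam z p X"
      by (rule stepN_cong) (use dL zpX in auto)
    finally show "LLof lam Lc z p X = stepN (LLof lam Lc) AT tau' lam z p X" .
  qed
  have cH: "constrH x lam hc tc ta Lc"
    using C unfolding constrH_def AT_def tau'_def by (auto simp: less_Suc_eq_le)
  define H' where "H' = (\<lambda>p. {a. a \<le> x \<and> AT 0 p a})"
  define T' where "T' = (\<lambda>p. {a. a \<le> x \<and> AT 1 p a})"
  have A: "\<forall>X<2. \<forall>p a. a \<le> x \<longrightarrow> AT X p a = (a \<in> HX X H' T' p)"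
    unfolding H'_def T'_def HX_def by (auto simp: less_2_cases_iff)
  have u: "LLof lam Lc (enc \<phi>) k 0 = sat (HX 0 H' T') T' tau' lam k \<phi>"
    by (rule uniq[OF C A]) (use k x in auto)
  have "LLof lam Lc x k 0 = sat (HX 0 H' T') T' tau' lam k \<phi>" using u x by simp
  also have "\<dots> = sat (HX 0 H T) T tau lam k \<phi>"
  proof (rule sat_cong[OF _ k])
    show "\<forall>p<lam. H' p = H p \<and> T' p = T p \<and> tau' p = tau p"
    proof (intro allI impI conjI)
      fix p assume p: "p < lam"
      have hx: "H p \<subseteq> {..x}" "T p \<subseteq> {..x}" using HT p bnd by blast+
      show "H' p = H p"
      proof (rule set_eqI)
        fix a show "a \<in> H' p \<longleftrightarrow> a \<in> H p"
        proof (cases "a \<le> x")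
          case True then show ?thesis using dH[OF p True] unfolding H'_def AT_def ATof_def by simp
        next
          case False then show ?thesis using hx unfolding H'_def by auto
        qed
      qed
      show "T' p = T p"
      proof (rule set_eqI)
        fix a show "a \<in> T' p \<longleftrightarrow> a \<in> T p"
        proof (cases "a \<le> x")
          case True then show ?thesis using dT[OF p True] unfolding T'_def AT_def ATof_def by simp
        next
          case False then show ?thesis using hx unfolding T'_def by auto
        qed
      qed
      show "tau' p = tau p" using dtau p by simp
    qed
  qed simp
  finally have "LLof lam Lc x k 0 = sat H T tau lam k \<phi>" by simp
  then have fl: "fin lam k Lc" by (rule fin)
  have "lam < Lmax x + 1" using L by simp
  then show ?thesis unfolding goodH_def using k hcb tcb tab Lcb trH cH fl by blast
qed


lemma bounded_model:
  assumes tr: "timed_ht_trace H T tau lam" and k: "k < lam"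
  shows "\<exists>H' T' tau' lam' k'. timed_ht_trace H' T' tau' lam' \<and> k' < lam' \<and> lam' \<le> Lmax (enc \<phi>) \<and>
    (k = 0 \<longrightarrow> k' = 0) \<and> (\<forall>p<lam'. T' p \<subseteq> {..enc \<phi>} \<and> tau' p \<le> p * enc \<phi>) \<and>
    sat H' T' tau' lam' k' \<phi> = sat H T tau lam k \<phi>"
proof -
  obtain H1 T1 tau1 lam1 k1 where b: "timed_ht_trace H1 T1 tau1 lam1" "lam1 \<le> 2 * N0 (enc \<phi>) + 2"
    "k1 < lam1" "k = 0 \<longrightarrow> k1 = 0" "sat H1 T1 tau1 lam1 k1 \<phi> = sat H T tau lam k \<phi>"
    using bounded_len[OF tr k, of \<phi>] by blast
  let ?x = "enc \<phi>"
  let ?t = "clampt tau1 ?x"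
  have two: "(0::nat) < 2" by simp
  have mono: "\<And>a b. a \<le> b \<Longrightarrow> b < lam1 \<Longrightarrow> tau1 a \<le> tau1 b" using trace_mono[OF b(1)] by blast
  have s1: "sat (HX 0 (rs ?x H1) (rs ?x T1)) (rs ?x T1) ?t lam1 k1 \<phi> = sat (HX 0 H1 T1) T1 ?t lam1 k1 \<phi>"
    by (rule sat_restrict[OF subs_refl two]) 
  have s2: "sat (HX 0 H1 T1) T1 ?t lam1 k1 \<phi> = sat (HX 0 H1 T1) T1 tau1 lam1 k1 \<phi>"
    by (rule sat_clamp[OF mono subs_refl b(3) two])
  have tr2: "timed_ht_trace (rs ?x H1) (rs ?x T1) ?t lam1"
    using b(1) unfolding timed_ht_trace_def rs_def by (auto intro: clampt_mono)
  have L: "lam1 \<le> Lmax ?x" using b(2) unfolding Lmax_def N0_def by simp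
  have bd: "\<forall>p<lam1. rs ?x T1 p \<subseteq> {..?x} \<and> ?t p \<le> p * ?x" using clampt_le unfolding rs_def by auto
  show ?thesis using tr2 b(3,4) L bd s1 s2 b(5)
    by (intro exI[of _ "rs ?x H1"] exI[of _ "rs ?x T1"] exI[of _ ?t] exI[of _ lam1] exI[of _ k1]) simp
qed

lemma sat_iff: "MHTf_satisfiable \<phi> \<longleftrightarrow> goodH (\<lambda>lam k Lc. k = 0 \<and> LLof lam Lc (enc \<phi>) k 0) (enc \<phi>)"
proof
  assume "MHTf_satisfiable \<phi>"
  then obtain H T tau lam where tr: "timed_ht_trace H T tau lam" "0 < lam" "sat H T tau lam 0 \<phi>"
    unfolding MHTf_satisfiable_def by blast
  obtain H' T' tau' lam' k' where b: "timed_ht_trace H' T' tau' lam'" "k' < lam'" "lam' \<le> Lmax (enc \<phi>)"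
    "k' = 0" "\<forall>p<lam'. T' p \<subseteq> {..enc \<phi>} \<and> tau' p \<le> p * enc \<phi>" "sat H' T' tau' lam' k' \<phi>"
    using bounded_model[OF tr(1,2), of \<phi>] tr(3) by auto
  show "goodH (\<lambda>lam k Lc. k = 0 \<and> LLof lam Lc (enc \<phi>) k 0) (enc \<phi>)"
    by (rule good_complete[OF b(1,2,3,5) _ refl]) (use b(4,6) in simp)
next
  assume "goodH (\<lambda>lam k Lc. k = 0 \<and> LLof lam Lc (enc \<phi>) k 0) (enc \<phi>)"
  then have "\<exists>H T tau lam k. timed_ht_trace H T tau lam \<and> k < lam \<and> k = 0 \<and> id (sat H T tau lam k \<phi>)"
    by (rule good_sound) simp
  then show "MHTf_satisfiable \<phi>" unfolding MHTf_satisfiable_def by auto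
qed

lemma taut_iff: "MHTf_tautology \<phi> \<longleftrightarrow> \<not> goodH (\<lambda>lam k Lc. \<not> LLof lam Lc (enc \<phi>) k 0) (enc \<phi>)"
proof
  assume t: "MHTf_tautology \<phi>"
  show "\<not> goodH (\<lambda>lam k Lc. \<not> LLof lam Lc (enc \<phi>) k 0) (enc \<phi>)"
  proof
    assume g: "goodH (\<lambda>lam k Lc. \<not> LLof lam Lc (enc \<phi>) k 0) (enc \<phi>)"
    have "\<exists>H T tau lam k. timed_ht_trace H T tau lam \<and> k < lam \<and> True \<and> \<not> (sat H T tau lam k \<phi>)"
      by (rule good_sound[OF g]) simp
    then show False using t unfolding MHTf_tautology_def by auto
  qed
next
  assume "\<not> goodH (\<lambda>lam k Lc. \<not> LLof lam Lc (enc \<phi>) k 0) (enc \<phi>)"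
  show "MHTf_tautology \<phi>"
  proof (rule ccontr)
    assume "\<not> MHTf_tautology \<phi>"
    then obtain H T tau lam k where tr: "timed_ht_trace H T tau lam" "k < lam" "\<not> sat H T tau lam k \<phi>"
      unfolding MHTf_tautology_def by blast
    obtain H' T' tau' lam' k' where b: "timed_ht_trace H' T' tau' lam'" "k' < lam'" "lam' \<le> Lmax (enc \<phi>)"
      "\<forall>p<lam'. T' p \<subseteq> {..enc \<phi>} \<and> tau' p \<le> p * enc \<phi>" "\<not> sat H' T' tau' lam' k' \<phi>"
      using bounded_model[OF tr(1,2), of \<phi>] tr(3) by auto
    have "goodH (\<lambda>lam k Lc. \<not> LLof lam Lc (enc \<phi>) k 0) (enc \<phi>)"
      by (rule good_complete[OF b(1,2,3,4) _ refl]) (use b(5) in simp)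
    then show False using \<open>\<not> goodH _ _\<close> by simp
  qed
qed

theorem corollary1:
  shows "decidable_mform MHTf_tautology \<and> decidable_mform MHTf_satisfiable"
proof
  let ?g = "tGOOD (tNot (tLL (Var 0) (Var 2) (Cst 0)))"
  show "decidable_mform MHTf_tautology"
  proof (rule decidable_via[where t="tNot ?g"])
    show "fv (tNot ?g) \<subseteq> {0}" using fv_tGOOD(1) by simp
    fix \<phi>
    have "ev (tNot ?g) (\<lambda>_. enc \<phi>) = (if hv ?g (\<lambda>_. enc \<phi>) then 0 else 1)"
      unfolding tNot_def hv_def by simp
    then show "ev (tNot ?g) (\<lambda>_. enc \<phi>) = (if MHTf_tautology \<phi> then 1 else 0)"
      using hv_tGOOD_taut[of "\<lambda>_. enc \<phi>"] taut_iff[of \<phi>] by simp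
  qed
next
  let ?g = "tGOOD (tAnd (tEq (Var 2) (Cst 0)) (tLL (Var 0) (Var 2) (Cst 0)))"
  show "decidable_mform MHTf_satisfiable"
  proof (rule decidable_via[where t="Cond ?g (Cst 1) (Cst 0)"])
    show "fv (Cond ?g (Cst 1) (Cst 0)) \<subseteq> {0}" using fv_tGOOD(2) by simp
    fix \<phi>
    have "ev (Cond ?g (Cst 1) (Cst 0)) (\<lambda>_. enc \<phi>) = (if hv ?g (\<lambda>_. enc \<phi>) then 1 else 0)"
      unfolding hv_def by simp
    then show "ev (Cond ?g (Cst 1) (Cst 0)) (\<lambda>_. enc \<phi>) = (if MHTf_satisfiable \<phi> then 1 else 0)"
      using hv_tGOOD_sat[of "\<lambda>_. enc \<phi>"] sat_iff[of \<phi>] by simp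
  qed
qed


end
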